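(* Assume (H1), (H3)$^*$ and (H4), and let $\nu$ be the normalised Lebesgue measure on $D\times V$. Then there exist $n_0\ge1$ (one may take $n_0=2$) and $c_1>0$ such that for every $(r,\upsilon)\in D\times V$ and every Borel $A\subseteq D\times V$, \[ \mathbf P_{(r,\upsilon)}\big((R_{T_{n_0}},\Upsilon_{T_{n_0}})\in A\ \big|\ n_0<\mathtt k\big)\ge c_1\,\nu(A). \]
   Context: $D\subseteq\mathbb R^3$ non-empty smooth bounded convex domain, $\partial D$ of zero Lebesgue measure; $V=\{\upsilon\in\mathbb R^3:\upsilon_{\min}\le|\upsilon|\le\upsilon_{\max}\}$, $0<\upsilon_{\min}<\upsilon_{\max}$. Measurable cross sections $\sigma_{\mathtt s},\sigma_{\mathtt f}\ge0$ on $D\times V$, $\pi_{\mathtt s},\pi_{\mathtt f}\ge0$ on $D\times V\times V$, $\int_V\pi_{\mathtt s}{\rm d}\upsilon'=1$, $m(r,\upsilon)=\int_V\pi_{\mathtt f}(r,\upsilon,\upsilon'){\rm d}\upsilon'$. (H1): all uniformly bounded. (H3)$^*$: $\inf_{r,\upsilon,\upsilon'}\sigma_{\mathtt f}(r,\upsilon)\pi_{\mathtt f}(r,\upsilon,\upsilon')>0$. (H4): $m\le N_{\max}$ for a constant $N_{\max}>1$ (fission yields at most $N_{\max}$ neutrons). The $\alpha\pi$-NRW $(R_t,\Upsilon_t)$ under $\mathbf P_{(r,\upsilon)}$ starts at $(r,\upsilon)$, moves linearly, is killed on leaving $D$ (exit time $\kappa^D$), and scatters at rate $\alpha=\sigma_{\mathtt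 s}+\sigma_{\mathtt f}m$; at the $k$-th scatter, from pre-scatter configuration $(r,\upsilon)$, an independent indicator $\mathtt I_k$ equals $1$ with probability $\sigma_{\mathtt f}m/(\sigma_{\mathtt s}+\sigma_{\mathtt f}m)$ (new velocity with density $\pi_{\mathtt f}(r,\upsilon,\cdot)/m(r,\upsilon)$) and $0$ otherwise (new velocity with density $\pi_{\mathtt s}(r,\upsilon,\cdot)$). $T_0=0$ and $T_n$ is the time of the $n$-th scatter with indicator $1$. Independently, for each $n\ge1$ let $\mathtt K_n$ be an indicator equal to $0$ with probability $m(R_{T_n},\Upsilon_{T_n-})/N_{\max}$ and $1$ otherwise; $\Gamma=\min\{n\ge1:\mathtt K_n=1\}$ and $\mathtt k=\Gamma\wedge\min\{n\ge1:T_n\ge\kappa^D\}$. Thus $\mathbf E_{(r,\upsilon)}[g(R_{T_n},\Upsilon_{T_n})\mathbf 1_{(n<\mathtt k)}]=N_{\max}^{-n}\mathbf E_{(r,\upsilon)}[\prod_{i=1}^n m(R_{T_i},\Upsilon_{T_i-})g(R_{T_n},\Upsilon_{T_n})\mathbf 1_{(T_n<\kappa^D)}]$. *)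

theory Defs
  imports "HOL-Analysis.Analysis"
begin

fun Ck_on :: "nat \<Rightarrow> (real^3) set \<Rightarrow> (real^3 \<Rightarrow> real) \<Rightarrow> bool" where
  "Ck_on 0 U f = continuous_on U f"
| "Ck_on (Suc k) U f =
     ((\<forall>x\<in>U. f differentiable (at x)) \<and>
      (\<forall>i\<in>(Basis :: (real^3) set). Ck_on k U (\<lambda>x. frechet_derivative f (at x) i)))"

definition Cinf_on :: "(real^3) set \<Rightarrow> (real^3 \<Rightarrow> real) \<Rightarrow> bool" where
  "Cinf_on U f \<longleftrightarrow> (\<forall>k. Ck_on k U f)"

definition smooth_domain :: "(real^3) set \<Rightarrow> bool" where
  "smooth_domain D \<longleftrightarrow> D \<noteq> {} \<and> open D \<and> connected D \<and>
     (\<exists>\<rho>. Cinf_on UNIV \<rho> \<and> D = {x. \<rho> x < 0} \<and>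
           (\<forall>x. \<rho> x = 0 \<longrightarrow> frechet_derivative \<rho> (at x) \<noteq> (\<lambda>_. 0)))"

definition Vset :: "real \<Rightarrow> real \<Rightarrow> (real^3) set" where
  "Vset vmin vmax = {v. vmin \<le> norm v \<and> norm v \<le> vmax}"

definition exit_time :: "(real^3) set \<Rightarrow> real^3 \<Rightarrow> real^3 \<Rightarrow> real" where
  "exit_time D r v = Inf {s. 0 \<le> s \<and> r + s *\<^sub>R v \<notin> D}"

definition mean_offspring ::
  "(real^3 \<Rightarrow> real^3 \<Rightarrow> real^3 \<Rightarrow> real) \<Rightarrow> (real^3) set \<Rightarrow> real^3 \<Rightarrow> real^3 \<Rightarrow> real" where
  "mean_offspring \<pi>f V r v = (LINT v':V|lborel. \<pi>f r v v')"

definition scat_rate ::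
  "(real^3 \<Rightarrow> real^3 \<Rightarrow> real) \<Rightarrow> (real^3 \<Rightarrow> real^3 \<Rightarrow> real) \<Rightarrow> (real^3 \<Rightarrow> real^3 \<Rightarrow> real)
     \<Rightarrow> real^3 \<Rightarrow> real^3 \<Rightarrow> real" where
  "scat_rate \<sigma>s \<sigma>f m r v = \<sigma>s r v + \<sigma>f r v * m r v"

definition first_event_density ::
  "(real^3 \<Rightarrow> real^3 \<Rightarrow> real) \<Rightarrow> real^3 \<Rightarrow> real^3 \<Rightarrow> real \<Rightarrow> real" where
  "first_event_density \<alpha> r v s =
     \<alpha> (r + s *\<^sub>R v) v * exp (- (LINT u:{0..s}|lborel. \<alpha> (r + u *\<^sub>R v) v))"

section \<open>The alpha-pi NRW via its first-event decomposition\<close>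

text \<open>One scatter event with indicator I = 0 (scattering) occurring before exit,
  followed by continuation h from the post-scatter configuration.\<close>
definition scatter_step ::
  "(real^3) set \<Rightarrow> (real^3) set \<Rightarrow> (real^3 \<Rightarrow> real^3 \<Rightarrow> real) \<Rightarrow> (real^3 \<Rightarrow> real^3 \<Rightarrow> real)
    \<Rightarrow> (real^3 \<Rightarrow> real^3 \<Rightarrow> real^3 \<Rightarrow> real) \<Rightarrow> (real^3 \<Rightarrow> real^3 \<Rightarrow> real^3 \<Rightarrow> real)
    \<Rightarrow> (real^3 \<Rightarrow> real^3 \<Rightarrow> ennreal) \<Rightarrow> real^3 \<Rightarrow> real^3 \<Rightarrow> ennreal" where
  "scatter_step D V \<sigma>s \<sigma>f \<pi>s \<pi>f h r v =
     (let m = mean_offspring \<pi>f V; \<alpha> = scat_rate \<sigma>s \<sigma>f m in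
      \<integral>\<^sup>+ s. indicator {0..<exit_time D r v} s *
        (let x = r + s *\<^sub>R v in
          ennreal (first_event_density \<alpha> r v s) *
          ennreal (\<sigma>s x v / \<alpha> x v) *
          (\<integral>\<^sup>+ v'. indicator V v' * ennreal (\<pi>s x v v') * h x v' \<partial>lborel)) \<partial>lborel)"

text \<open>One scatter event with indicator I = 1 (fission) occurring before exit, which
  survives the independent thinning K (probability m(x, v_-)/Nmax, v_- the pre-scatter
  velocity), followed by g evaluated at the post-fission configuration.\<close>
definition fission_step ::
  "(real^3) set \<Rightarrow> (real^3) set \<Rightarrow> (real^3 \<Rightarrow> real^3 \<Rightarrow> real) \<Rightarrow> (real^3 \<Rightarrow> real^3 \<Rightarrow> real)
    \<Rightarrow> (real^3 \<Rightarrow> real^3 \<Rightarrow> real^3 \<Rightarrow> real) \<Rightarrow> (real^3 \<Rightarrow> real^3 \<Rightarrow> real^3 \<Rightarrow> real) \<Rightarrow> real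
    \<Rightarrow> (real^3 \<Rightarrow> real^3 \<Rightarrow> ennreal) \<Rightarrow> real^3 \<Rightarrow> real^3 \<Rightarrow> ennreal" where
  "fission_step D V \<sigma>s \<sigma>f \<pi>s \<pi>f Nmax g r v =
     (let m = mean_offspring \<pi>f V; \<alpha> = scat_rate \<sigma>s \<sigma>f m in
      \<integral>\<^sup>+ s. indicator {0..<exit_time D r v} s *
        (let x = r + s *\<^sub>R v in
          ennreal (first_event_density \<alpha> r v s) *
          ennreal (\<sigma>f x v * m x v / \<alpha> x v) *
          ennreal (m x v / Nmax) *
          (\<integral>\<^sup>+ v'. indicator V v' * ennreal (\<pi>f x v v' / m x v) * g x v' \<partial>lborel)) \<partial>lborel)"

text \<open>E_(r,v)[ g(R_{T_1}, Upsilon_{T_1}) 1(1 < k) ]: any number of scatterings, then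
  a surviving fission, all before exit.\<close>
definition fission_kernel ::
  "(real^3) set \<Rightarrow> (real^3) set \<Rightarrow> (real^3 \<Rightarrow> real^3 \<Rightarrow> real) \<Rightarrow> (real^3 \<Rightarrow> real^3 \<Rightarrow> real)
    \<Rightarrow> (real^3 \<Rightarrow> real^3 \<Rightarrow> real^3 \<Rightarrow> real) \<Rightarrow> (real^3 \<Rightarrow> real^3 \<Rightarrow> real^3 \<Rightarrow> real) \<Rightarrow> real
    \<Rightarrow> (real^3 \<Rightarrow> real^3 \<Rightarrow> ennreal) \<Rightarrow> real^3 \<Rightarrow> real^3 \<Rightarrow> ennreal" where
  "fission_kernel D V \<sigma>s \<sigma>f \<pi>s \<pi>f Nmax g r v =
     (\<Sum>k. ((scatter_step D V \<sigma>s \<sigma>f \<pi>s \<pi>f ^^ k)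
              (fission_step D V \<sigma>s \<sigma>f \<pi>s \<pi>f Nmax g)) r v)"

text \<open>E_(r,v)[ g(R_{T_n}, Upsilon_{T_n}) 1(n < k) ] (strong Markov property at T_1,...,T_n).\<close>
definition killed_expect ::
  "(real^3) set \<Rightarrow> (real^3) set \<Rightarrow> (real^3 \<Rightarrow> real^3 \<Rightarrow> real) \<Rightarrow> (real^3 \<Rightarrow> real^3 \<Rightarrow> real)
    \<Rightarrow> (real^3 \<Rightarrow> real^3 \<Rightarrow> real^3 \<Rightarrow> real) \<Rightarrow> (real^3 \<Rightarrow> real^3 \<Rightarrow> real^3 \<Rightarrow> real) \<Rightarrow> real
    \<Rightarrow> nat \<Rightarrow> (real^3 \<Rightarrow> real^3 \<Rightarrow> ennreal) \<Rightarrow> real^3 \<Rightarrow> real^3 \<Rightarrow> ennreal" where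
  "killed_expect D V \<sigma>s \<sigma>f \<pi>s \<pi>f Nmax n g =
     (fission_kernel D V \<sigma>s \<sigma>f \<pi>s \<pi>f Nmax ^^ n) g"

text \<open>P_(r,v)( (R_{T_n}, Upsilon_{T_n}) \<in> A | n < k ).\<close>
definition cond_prob ::
  "(real^3) set \<Rightarrow> (real^3) set \<Rightarrow> (real^3 \<Rightarrow> real^3 \<Rightarrow> real) \<Rightarrow> (real^3 \<Rightarrow> real^3 \<Rightarrow> real)
    \<Rightarrow> (real^3 \<Rightarrow> real^3 \<Rightarrow> real^3 \<Rightarrow> real) \<Rightarrow> (real^3 \<Rightarrow> real^3 \<Rightarrow> real^3 \<Rightarrow> real) \<Rightarrow> real
    \<Rightarrow> nat \<Rightarrow> ((real^3) \<times> (real^3)) set \<Rightarrow> real^3 \<Rightarrow> real^3 \<Rightarrow> ennreal" where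
  "cond_prob D V \<sigma>s \<sigma>f \<pi>s \<pi>f Nmax n A r v =
     killed_expect D V \<sigma>s \<sigma>f \<pi>s \<pi>f Nmax n (\<lambda>x w. indicator A (x, w)) r v /
     killed_expect D V \<sigma>s \<sigma>f \<pi>s \<pi>f Nmax n (\<lambda>_ _. 1) r v"

end

theory Submission
  imports Defs
begin

lemma nn_integral_cmult_ge:
  "c * integral\<^sup>N M f \<le> (\<integral>\<^sup>+ x. c * f x \<partial>M)"
  unfolding nn_integral_def SUP_mult_left_ennreal
proof (rule SUP_least)
  fix g assume g: "g \<in> {g. simple_function M g \<and> g \<le> f}"
  then have sg: "simple_function M g" and le: "g \<le> f" by auto
  have "c * integral\<^sup>S M g = integral\<^sup>S M (\<lambda>x. c * g x)"
    using sg by simp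
  also have "\<dots> \<le> (SUP g \<in> {g. simple_function M g \<and> g \<le> (\<lambda>x. c * f x)}. integral\<^sup>S M g)"
    apply (rule SUP_upper)
    using sg le by (auto simp: le_fun_def intro!: mult_left_mono simple_function_compose2[where h="(*)"])
  finally show "c * integral\<^sup>S M g \<le> (SUP g \<in> {g. simple_function M g \<and> g \<le> (\<lambda>x. c * f x)}. integral\<^sup>S M g)" .
qed

lemma nn_integral_superadd:
  "integral\<^sup>N M f + integral\<^sup>N M g \<le> (\<integral>\<^sup>+ x. f x + g x \<partial>M)"
proof -
  let ?S = "\<lambda>f. {g. simple_function M g \<and> g \<le> f}"
  have ne: "?S h \<noteq> {}" for h :: "_ \<Rightarrow> ennreal"
  proof -
    have "(\<lambda>_. 0) \<in> ?S h" by (auto simp: le_fun_def)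
    then show ?thesis by blast
  qed
  have "(SUP a\<in>?S f. integral\<^sup>S M a) + (SUP b\<in>?S g. integral\<^sup>S M b) \<le> integral\<^sup>N M (\<lambda>x. f x + g x)"
    unfolding ennreal_SUP_add_left[OF ne, symmetric]
  proof (rule SUP_least)
    fix a assume a: "a \<in> ?S f"
    show "integral\<^sup>S M a + (SUP b\<in>?S g. integral\<^sup>S M b) \<le> integral\<^sup>N M (\<lambda>x. f x + g x)"
      unfolding ennreal_SUP_add_right[OF ne]
    proof (rule SUP_least)
      fix b assume b: "b \<in> ?S g"
      have "integral\<^sup>S M a + integral\<^sup>S M b = integral\<^sup>S M (\<lambda>x. a x + b x)"
        using a b by simp
      also have "\<dots> \<le> integral\<^sup>N M (\<lambda>x. f x + g x)"
        unfolding nn_integral_def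
        apply (rule SUP_upper)
        using a b by (auto simp: le_fun_def intro!: add_mono)
      finally show "integral\<^sup>S M a + integral\<^sup>S M b \<le> integral\<^sup>N M (\<lambda>x. f x + g x)" .
    qed
  qed
  then show ?thesis unfolding nn_integral_def .
qed


lemma exp_density_le1:
  fixes \<beta> :: "real \<Rightarrow> real" and t K :: real
  assumes meas: "set_borel_measurable lborel {0..<t} \<beta>"
    and bnd: "\<And>u. 0 \<le> u \<Longrightarrow> u < t \<Longrightarrow> 0 \<le> \<beta> u \<and> \<beta> u \<le> K"
  shows "(\<integral>\<^sup>+ s. indicator {0..<t} s * ennreal (\<beta> s * exp (- (LINT u:{0..s}|lborel. \<beta> u))) \<partial>lborel) \<le> 1"
proof (cases "t \<le> 0")
  case True then show ?thesis by simp
next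
  case False
  hence t0: "0 < t" by simp
  hence K0: "0 \<le> K" using bnd[of 0] by auto
  define \<gamma> where "\<gamma> u = indicator {0..<t} u * \<beta> u" for u
  have \<gamma>m[measurable]: "\<gamma> \<in> borel_measurable borel"
    using meas unfolding set_borel_measurable_def \<gamma>_def by simp
  have \<gamma>0: "0 \<le> \<gamma> u" and \<gamma>K: "\<gamma> u \<le> K" for u
    using bnd[of u] K0 by (auto simp: \<gamma>_def split: split_indicator)
  have \<gamma>i: "integrable lborel \<gamma>"
    by (rule integrableI_bounded_set[where A="{0..<t}" and B=K])
       (use t0 bnd in \<open>auto simp: \<gamma>0 \<gamma>K \<gamma>_def\<close>)
  have \<gamma>iS: "integrable lborel (\<lambda>u. indicator S u * \<gamma> u)" if "S \<in> sets borel" for S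
    using integrable_mult_indicator[of S lborel \<gamma>] that \<gamma>i by simp
  define \<Gamma> where "\<Gamma> s = integral\<^sup>L lborel (\<lambda>u. indicator {0..s} u * \<gamma> u)" for s
  define P where "P a b = integral\<^sup>L lborel (\<lambda>u. indicator {a<..b} u * \<gamma> u)" for a b
  have split: "\<Gamma> b = \<Gamma> a + P a b" if "0 \<le> a" "a \<le> b" for a b
  proof -
    have "(\<lambda>u. indicator {0..b} u * \<gamma> u) = (\<lambda>u. indicator {0..a} u * \<gamma> u + indicator {a<..b} u * \<gamma> u)"
      using that by (auto simp: fun_eq_iff split: split_indicator)
    then show ?thesis unfolding \<Gamma>_def P_def using \<gamma>iS by simp
  qed
  have P0: "0 \<le> P a b" for a b
    unfolding P_def by (rule integral_nonneg_AE) (auto simp: \<gamma>0)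
  have PK: "P a b \<le> K * (b - a)" if "a \<le> b" for a b
  proof -
    have "P a b \<le> integral\<^sup>L lborel (\<lambda>u. indicator {a<..b} u * K)"
      unfolding P_def
      using that by (intro integral_mono) (auto simp: \<gamma>iS \<gamma>K integrable_indicator_iff split: split_indicator)
    also have "\<dots> = K * (b - a)" using that by simp
    finally show ?thesis .
  qed
  have \<Gamma>0: "0 \<le> \<Gamma> s" for s
    unfolding \<Gamma>_def by (rule integral_nonneg_AE) (auto simp: \<gamma>0)
  have \<Gamma>neg: "\<Gamma> s = 0" if "s < 0" for s
    using that unfolding \<Gamma>_def by simp
  have \<Gamma>mono: "mono \<Gamma>"
  proof (rule monoI)
    fix a b :: real assume ab: "a \<le> b"
    show "\<Gamma> a \<le> \<Gamma> b"
    proof (cases "a < 0")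
      case True then show ?thesis using \<Gamma>neg \<Gamma>0 by simp
    next
      case False then show ?thesis using split[of a b] ab P0[of a b] by simp
    qed
  qed
  have \<Gamma>m[measurable]: "\<Gamma> \<in> borel_measurable borel"
    by (rule borel_measurable_mono[OF \<Gamma>mono])
  define F where "F s = ennreal (\<gamma> s * exp (- \<Gamma> s))" for s
  have Fm[measurable]: "F \<in> borel_measurable borel" unfolding F_def by measurable
  have piece: "(\<integral>\<^sup>+ s. indicator {a<..b} s * F s \<partial>lborel)
      \<le> ennreal (exp (K*h) * (exp (- \<Gamma> a) - exp (- \<Gamma> b)))"
    if ab: "0 \<le> a" "a \<le> b" "b - a \<le> h" for a b h
  proof -
    have "(\<integral>\<^sup>+ s. indicator {a<..b} s * F s \<partial>lborel)
        \<le> (\<integral>\<^sup>+ s. ennreal (indicator {a<..b} s * \<gamma> s) * ennreal (exp (- \<Gamma> a)) \<partial>lborel)"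
    proof (rule nn_integral_mono)
      fix s
      show "indicator {a<..b} s * F s \<le> ennreal (indicator {a<..b} s * \<gamma> s) * ennreal (exp (- \<Gamma> a))"
      proof (cases "s \<in> {a<..b}")
        case True
        then have "\<Gamma> a \<le> \<Gamma> s" using \<Gamma>mono by (auto simp: mono_def)
        then have "\<gamma> s * exp (- \<Gamma> s) \<le> \<gamma> s * exp (- \<Gamma> a)"
          by (intro mult_left_mono) (auto simp: \<gamma>0)
        then show ?thesis using True
          by (simp add: F_def ennreal_mult[symmetric] \<gamma>0 ennreal_leI)
      qed simp
    qed
    also have "\<dots> = (\<integral>\<^sup>+ s. ennreal (indicator {a<..b} s * \<gamma> s) \<partial>lborel) * ennreal (exp (- \<Gamma> a))"
      by (rule nn_integral_multc) measurable
    also have "(\<integral>\<^sup>+ s. ennreal (indicator {a<..b} s * \<gamma> s) \<partial>lborel) = ennreal (P a b)"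
      unfolding P_def by (rule nn_integral_eq_integral) (auto simp: \<gamma>iS \<gamma>0)
    also have "ennreal (P a b) * ennreal (exp (- \<Gamma> a)) = ennreal (P a b * exp (- \<Gamma> a))"
      by (simp add: ennreal_mult P0)
    also have "\<dots> \<le> ennreal (exp (K*h) * (exp (- \<Gamma> a) - exp (- \<Gamma> b)))"
    proof (rule ennreal_leI)
      define d where "d = P a b"
      have d0: "0 \<le> d" and dK: "d \<le> K * h"
        using P0[of a b] PK[of a b] ab K0 unfolding d_def
        by (auto intro: order_trans mult_left_mono)
      have eb: "exp (- \<Gamma> b) = exp (- \<Gamma> a) * exp (- d)"
        using split[of a b] ab unfolding d_def by (simp add: exp_add[symmetric])
      have "d \<le> exp d - 1" using exp_ge_add_one_self[of d] by linarith
      also have "exp d - 1 = exp d * (1 - exp (- d))" by (simp add: algebra_simps exp_minus field_simps)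
      also have "\<dots> \<le> exp (K*h) * (1 - exp (- d))"
        using dK d0 by (intro mult_right_mono) auto
      finally have "d \<le> exp (K*h) * (1 - exp (- d))" .
      then have "d * exp (- \<Gamma> a) \<le> exp (K*h) * (1 - exp (- d)) * exp (- \<Gamma> a)"
        by (intro mult_right_mono) auto
      then show "P a b * exp (- \<Gamma> a) \<le> exp (K*h) * (exp (- \<Gamma> a) - exp (- \<Gamma> b))"
        unfolding eb d_def[symmetric] by (simp add: algebra_simps)
    qed
    finally show ?thesis .
  qed
  have ind: "(\<integral>\<^sup>+ s. indicator {0<..real k * h} s * F s \<partial>lborel)
      \<le> ennreal (exp (K*h) * (exp (- \<Gamma> 0) - exp (- \<Gamma> (real k * h))))" if h0: "0 \<le> h" for k h
  proof (induction k)
    case 0 then show ?case by simp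
  next
    case (Suc k)
    have "(\<integral>\<^sup>+ s. indicator {0<..real (Suc k) * h} s * F s \<partial>lborel)
       = (\<integral>\<^sup>+ s. indicator {0<..real k * h} s * F s + indicator {real k * h<..real (Suc k) * h} s * F s \<partial>lborel)"
    proof (intro nn_integral_cong)
      fix s
      have ind3: "(indicator {0<..b} s :: ennreal) = indicator {0<..a} s + indicator {a<..b} s"
        if "0 \<le> a" "a \<le> b" for a b :: real
        using that by (auto split: split_indicator)
      have hk: "0 \<le> real k * h" "real k * h \<le> real (Suc k) * h" using h0 by (auto simp: algebra_simps)
      show "indicator {0<..real (Suc k) * h} s * F s = indicator {0<..real k * h} s * F s + indicator {real k * h<..real (Suc k) * h} s * F s"
        unfolding ind3[OF hk] by (simp add: distrib_right)
    qed
    also have "\<dots> = (\<integral>\<^sup>+ s. indicator {0<..real k * h} s * F s \<partial>lborel) +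
         (\<integral>\<^sup>+ s. indicator {real k * h<..real (Suc k) * h} s * F s \<partial>lborel)"
      by (rule nn_integral_add) measurable
    also have "\<dots> \<le> ennreal (exp (K*h) * (exp (- \<Gamma> 0) - exp (- \<Gamma> (real k * h)))) +
        ennreal (exp (K*h) * (exp (- \<Gamma> (real k * h)) - exp (- \<Gamma> (real (Suc k) * h))))"
      using h0 by (intro add_mono Suc piece) (auto simp: algebra_simps)
    also have "\<dots> = ennreal (exp (K*h) * (exp (- \<Gamma> 0) - exp (- \<Gamma> (real (Suc k) * h))))"
    proof -
      have m1: "\<Gamma> 0 \<le> \<Gamma> (real k * h)" "\<Gamma> (real k * h) \<le> \<Gamma> (real (Suc k) * h)"
        using \<Gamma>mono h0 by (auto simp: mono_def intro!: mult_right_mono monoD[OF \<Gamma>mono])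
      then show ?thesis
        by (subst ennreal_plus[symmetric]) (auto simp: algebra_simps)
    qed
    finally show ?case .
  qed
  have bound: "(\<integral>\<^sup>+ s. indicator {0..<t} s * ennreal (\<beta> s * exp (- (LINT u:{0..s}|lborel. \<beta> u))) \<partial>lborel)
      \<le> ennreal (exp (K * t / real n))" if n: "1 \<le> n" for n
  proof -
    have "(\<integral>\<^sup>+ s. indicator {0..<t} s * ennreal (\<beta> s * exp (- (LINT u:{0..s}|lborel. \<beta> u))) \<partial>lborel)
        = (\<integral>\<^sup>+ s. indicator {0..<t} s * F s \<partial>lborel)"
    proof (rule nn_integral_cong)
      fix s
      show "indicator {0..<t} s * ennreal (\<beta> s * exp (- (LINT u:{0..s}|lborel. \<beta> u))) = indicator {0..<t} s * F s"
      proof (cases "s \<in> {0..<t}")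
        case True
        have "(LINT u:{0..s}|lborel. \<beta> u) = \<Gamma> s"
          unfolding \<Gamma>_def set_lebesgue_integral_def
          using True by (intro arg_cong[where f="integral\<^sup>L lborel"]) (auto simp: fun_eq_iff \<gamma>_def split: split_indicator)
        then show ?thesis using True by (simp add: F_def \<gamma>_def)
      qed simp
    qed
    also have "\<dots> \<le> (\<integral>\<^sup>+ s. indicator {0<..real n * (t / real n)} s * F s \<partial>lborel)"
      using n by (intro nn_integral_mono_AE)
        (auto intro!: eventually_mono[OF AE_lborel_singleton[of 0]] split: split_indicator)
    also have "\<dots> \<le> ennreal (exp (K*(t / real n)) * (exp (- \<Gamma> 0) - exp (- \<Gamma> (real n * (t / real n)))))"
      by (rule ind) (use t0 in auto)
    also have "\<dots> \<le> ennreal (exp (K * t / real n))"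
    proof (rule ennreal_leI)
      have "exp (- \<Gamma> 0) - exp (- \<Gamma> (real n * (t / real n))) \<le> 1"
        using \<Gamma>0[of 0] by (smt (verit) exp_ge_zero exp_le_one_iff)
      then show "exp (K*(t / real n)) * (exp (- \<Gamma> 0) - exp (- \<Gamma> (real n * (t / real n)))) \<le> exp (K * t / real n)"
        by (simp add: mult_left_le)
    qed
    finally show ?thesis .
  qed
  have lim: "(\<lambda>n. ennreal (exp (K * t / real n))) \<longlonglongrightarrow> ennreal (exp 0)"
    by (intro tendsto_ennrealI tendsto_intros lim_const_over_n)
  show ?thesis
    using LIMSEQ_le_const[OF lim, of "(\<integral>\<^sup>+ s. indicator {0..<t} s * ennreal (\<beta> s * exp (- (LINT u:{0..s}|lborel. \<beta> u))) \<partial>lborel)"]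
      bound by auto
qed


lemma exit_in:
  assumes "0 \<le> s" "s < exit_time D r v"
  shows "r + s *\<^sub>R v \<in> D"
proof (rule ccontr)
  assume "r + s *\<^sub>R v \<notin> D"
  then have "s \<in> {s. 0 \<le> s \<and> r + s *\<^sub>R v \<notin> D}" using assms by auto
  moreover have "bdd_below {s. 0 \<le> s \<and> r + s *\<^sub>R v \<notin> D}"
    by (rule bdd_belowI[of _ 0]) auto
  ultimately have "exit_time D r v \<le> s" unfolding exit_time_def by (rule cInf_lower)
  then show False using assms by simp
qed

lemma exit_nonempty:
  assumes R: "\<And>y. y \<in> D \<Longrightarrow> norm y \<le> R" and R0: "0 \<le> R" and w: "w \<noteq> 0"
  shows "(R + norm x + 1) / norm w \<in> {s. 0 \<le> s \<and> x + s *\<^sub>R w \<notin> D}"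
proof -
  define u where "u = (R + norm x + 1) / norm w"
  have nw: "0 < norm w" using w by simp
  have u0: "0 \<le> u" unfolding u_def using nw R0 by simp
  have "norm (u *\<^sub>R w) = R + norm x + 1"
    using nw u0 R0 unfolding u_def by simp
  moreover have "norm (u *\<^sub>R w) \<le> norm (x + u *\<^sub>R w) + norm x"
    using norm_triangle_ineq4[of "x + u *\<^sub>R w" x] by simp
  ultimately have "norm (x + u *\<^sub>R w) > R" by linarith
  then have "x + u *\<^sub>R w \<notin> D" using R by force
  with u0 show ?thesis unfolding u_def by auto
qed

lemma exit_le:
  assumes R: "\<And>y. y \<in> D \<Longrightarrow> norm y \<le> R" and R0: "0 \<le> R" and w: "w \<noteq> 0"
  shows "exit_time D x w \<le> (R + norm x + 1) / norm w"
proof -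
  have "bdd_below {s. 0 \<le> s \<and> x + s *\<^sub>R w \<notin> D}" by (rule bdd_belowI[of _ 0]) auto
  from cInf_lower[OF exit_nonempty[OF R R0 w, where x=x] this] show ?thesis unfolding exit_time_def .
qed

lemma exit_gt:
  assumes D: "open D" "convex D" and R: "\<And>y. y \<in> D \<Longrightarrow> norm y \<le> R" and R0: "0 \<le> R"
    and w: "w \<noteq> 0" and x: "x \<in> D" and s: "0 < s" and xs: "x + s *\<^sub>R w \<in> D"
  shows "s < exit_time D x w"
proof -
  obtain e where e: "0 < e" "ball (x + s *\<^sub>R w) e \<subseteq> D"
    using D(1) xs by (meson open_contains_ball)
  have nw: "0 < norm w" using w by simp
  define \<eta> where "\<eta> = e / (2 * norm w)"
  have \<eta>0: "0 < \<eta>" unfolding \<eta>_def using e nw by simp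
  have "dist (x + s *\<^sub>R w) (x + (s + \<eta>) *\<^sub>R w) = \<eta> * norm w"
    using \<eta>0 by (simp add: dist_norm algebra_simps)
  also have "\<dots> < e" unfolding \<eta>_def using nw e by (simp add: field_simps)
  finally have far: "x + (s + \<eta>) *\<^sub>R w \<in> D" using e by auto
  have seg: "x + u *\<^sub>R w \<in> D" if u: "0 \<le> u" "u \<le> s + \<eta>" for u
  proof -
    define \<theta> where "\<theta> = u / (s + \<eta>)"
    have th: "0 \<le> \<theta>" "\<theta> \<le> 1" unfolding \<theta>_def using u s \<eta>0 by auto
    have "(1 - \<theta>) *\<^sub>R x + \<theta> *\<^sub>R (x + (s + \<eta>) *\<^sub>R w) \<in> D"
      using convexD[OF D(2) x far, of "1 - \<theta>" \<theta>] th by simp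
    moreover have "(1 - \<theta>) *\<^sub>R x + \<theta> *\<^sub>R (x + (s + \<eta>) *\<^sub>R w) = x + u *\<^sub>R w"
    proof -
      have th2: "\<theta> * (s + \<eta>) = u" unfolding \<theta>_def using s \<eta>0 by simp
      have "(1 - \<theta>) *\<^sub>R x + \<theta> *\<^sub>R (x + (s + \<eta>) *\<^sub>R w) = x + (\<theta> * (s + \<eta>)) *\<^sub>R w"
        by (simp add: algebra_simps)
      then show ?thesis using th2 by simp
    qed
    ultimately show ?thesis by simp
  qed
  have "s + \<eta> \<le> exit_time D x w"
    unfolding exit_time_def
  proof (rule cInf_greatest)
    show "{s. 0 \<le> s \<and> x + s *\<^sub>R w \<notin> D} \<noteq> {}" using exit_nonempty[OF R R0 w] by blast
    fix u assume "u \<in> {s. 0 \<le> s \<and> x + s *\<^sub>R w \<notin> D}"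
    then show "s + \<eta> \<le> u" using seg by force
  qed
  then show ?thesis using \<eta>0 by simp
qed

lemma exit_pos:
  assumes D: "open D" "convex D" and R: "\<And>y. y \<in> D \<Longrightarrow> norm y \<le> R" and R0: "0 \<le> R"
    and w: "w \<noteq> 0" and x: "x \<in> D"
  shows "0 < exit_time D x w"
proof -
  obtain e where e: "0 < e" "ball x e \<subseteq> D"
    using D(1) x by (meson open_contains_ball)
  have nw: "0 < norm w" using w by simp
  define s where "s = e / (2 * norm w)"
  have s0: "0 < s" unfolding s_def using e nw by simp
  have "dist x (x + s *\<^sub>R w) = s * norm w" using s0 by (simp add: dist_norm)
  also have "\<dots> < e" unfolding s_def using nw e by (simp add: field_simps)
  finally have "x + s *\<^sub>R w \<in> D" using e by auto
  from exit_gt[OF D R R0 w x s0 this] s0 show ?thesis by simp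
qed


lemma Vset_borel[measurable]: "Vset a b \<in> sets borel"
  unfolding Vset_def by measurable

lemma affine_subst:
  fixes G :: "real^3 \<Rightarrow> ennreal" and x :: "real^3" and s :: real
  assumes G[measurable]: "G \<in> borel_measurable borel" and s: "0 < s"
  shows "(\<integral>\<^sup>+ y. G y \<partial>lborel) = ennreal (s^3) * (\<integral>\<^sup>+ w. G (x + s *\<^sub>R w) \<partial>lborel)"
proof -
  have eq: "lborel = density (distr lborel borel (\<lambda>w. x + s *\<^sub>R w)) (\<lambda>_. \<bar>s\<bar>^DIM(real^3))"
    using s by (intro lborel_affine) simp
  have "(\<integral>\<^sup>+ y. G y \<partial>lborel) = (\<integral>\<^sup>+ y. G y \<partial>density (distr lborel borel (\<lambda>w. x + s *\<^sub>R w)) (\<lambda>_. \<bar>s\<bar>^DIM(real^3)))"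
    by (rule arg_cong[where f="\<lambda>M. integral\<^sup>N M G", OF eq])
  also have "\<dots> = (\<integral>\<^sup>+ y. ennreal (\<bar>s\<bar>^DIM(real^3)) * G y \<partial>distr lborel borel (\<lambda>w. x + s *\<^sub>R w))"
    by (subst nn_integral_density) auto
  also have "\<dots> = (\<integral>\<^sup>+ w. ennreal (\<bar>s\<bar>^DIM(real^3)) * G (x + s *\<^sub>R w) \<partial>lborel)"
    by (subst nn_integral_distr) auto
  also have "\<dots> = ennreal (s^3) * (\<integral>\<^sup>+ w. G (x + s *\<^sub>R w) \<partial>lborel)"
    using s by (subst nn_integral_cmult) auto
  finally show ?thesis .
qed

lemma W_bound:
  fixes z :: "real^3"
  assumes vel: "0 < vmin" "vmin < vmax" and z: "z \<noteq> 0"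
  shows "ennreal (vmin^3 * (1/vmin - 1/vmax) / (norm z)^2) \<le>
    (\<integral>\<^sup>+ s. indicator {0<..} s * ennreal (1/s^3) * indicator (Vset vmin vmax) ((1/s) *\<^sub>R z) \<partial>lborel)"
proof -
  define d where "d = norm z"
  have d0: "0 < d" using z unfolding d_def by simp
  have "(\<integral>\<^sup>+ s. ennreal ((vmin/d)^3) * indicator {d/vmax..d/vmin} s \<partial>lborel)
      \<le> (\<integral>\<^sup>+ s. indicator {0<..} s * ennreal (1/s^3) * indicator (Vset vmin vmax) ((1/s) *\<^sub>R z) \<partial>lborel)"
  proof (rule nn_integral_mono)
    fix s
    show "ennreal ((vmin/d)^3) * indicator {d/vmax..d/vmin} s \<le> indicator {0<..} s * ennreal (1/s^3) * indicator (Vset vmin vmax) ((1/s) *\<^sub>R z)"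
    proof (cases "s \<in> {d/vmax..d/vmin}")
      case True
      then have s1: "d/vmax \<le> s" "s \<le> d/vmin" by auto
      have s0: "0 < s" using s1 d0 vel by (smt (verit) divide_pos_pos)
      have n: "norm ((1/s) *\<^sub>R z) = d / s" using s0 unfolding d_def by simp
      have "vmin \<le> d / s" using s1 s0 vel by (simp add: field_simps)
      moreover have "d / s \<le> vmax" using s1 s0 vel by (simp add: field_simps)
      ultimately have inV: "(1/s) *\<^sub>R z \<in> Vset vmin vmax" unfolding Vset_def using n by simp
      have "vmin / d \<le> 1 / s" using s1 s0 vel d0 by (simp add: field_simps)
      then have "(vmin/d)^3 \<le> (1/s)^3" by (intro power_mono) (use vel d0 in auto)
      then have "(vmin/d)^3 \<le> 1/s^3" by (simp add: power_divide)
      then show ?thesis using True inV s0 by (simp add: ennreal_leI)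
    qed simp
  qed
  moreover have "(\<integral>\<^sup>+ s. ennreal ((vmin/d)^3) * indicator {d/vmax..d/vmin} s \<partial>lborel)
      = ennreal ((vmin/d)^3 * (d/vmin - d/vmax))"
  proof -
    have le: "d/vmax \<le> d/vmin" using vel d0 by (simp add: frac_le)
    show ?thesis using le vel d0
      by (subst nn_integral_cmult_indicator) (auto simp: ennreal_mult[symmetric])
  qed
  moreover have "(vmin/d)^3 * (d/vmin - d/vmax) = vmin^3 * (1/vmin - 1/vmax) / d^2"
    using d0 vel by (simp add: field_simps power2_eq_square power3_eq_cube)
  ultimately show ?thesis unfolding d_def by simp
qed

lemma geo:
  fixes D :: "(real^3) set" and A :: "((real^3) \<times> (real^3)) set" and x :: "real^3"
  assumes D: "open D" "convex D" and R: "\<And>y. y \<in> D \<Longrightarrow> norm y \<le> R"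
    and x: "x \<in> D" and vel: "0 < vmin" "vmin < vmax"
    and A: "A \<in> sets borel" "A \<subseteq> D \<times> Vset vmin vmax"
  shows "ennreal (vmin^3 * (1/vmin - 1/vmax) / (2*R)^2) * emeasure lborel A \<le>
   (\<integral>\<^sup>+ w. indicator (Vset vmin vmax) w * (\<integral>\<^sup>+ s. indicator {0..<exit_time D x w} s *
      (\<integral>\<^sup>+ u. indicator (Vset vmin vmax) u * indicator A (x + s *\<^sub>R w, u) \<partial>lborel) \<partial>lborel) \<partial>lborel)"
proof -
  define V where "V = Vset vmin vmax"
  have Vm[measurable]: "V \<in> sets borel" unfolding V_def by simp
  have Am[measurable]: "A \<in> sets borel" using A by simp
  have R0: "0 \<le> R" using R[OF x] by (smt (verit) norm_ge_zero)
  define c4 where "c4 = vmin^3 * (1/vmin - 1/vmax) / (2*R)^2"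
  define B where "B y = (\<integral>\<^sup>+ u. indicator A (y, u) \<partial>lborel)" for y
  have Bm[measurable]: "B \<in> borel_measurable borel" unfolding B_def by measurable
  have B0: "B y = 0" if "y \<notin> D" for y
  proof -
    have "\<And>u. indicator A (y, u) = (0::ennreal)" using A that by (auto simp: indicator_def)
    then show ?thesis unfolding B_def by simp
  qed
  have BV: "(\<integral>\<^sup>+ u. indicator V u * indicator A (y, u) \<partial>lborel) = B y" for y
    unfolding B_def V_def using A by (intro nn_integral_cong) (auto simp: indicator_def)
  have V0: "w \<noteq> 0" if "w \<in> V" for w using that vel unfolding V_def Vset_def by auto
  have "(\<integral>\<^sup>+ w. \<integral>\<^sup>+ s. indicator V w * indicator {0<..} s * B (x + s *\<^sub>R w) \<partial>lborel \<partial>lborel)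
     \<le> (\<integral>\<^sup>+ w. indicator V w * (\<integral>\<^sup>+ s. indicator {0..<exit_time D x w} s *
      (\<integral>\<^sup>+ u. indicator V u * indicator A (x + s *\<^sub>R w, u) \<partial>lborel) \<partial>lborel) \<partial>lborel)"
  proof (rule nn_integral_mono)
    fix w
    show "(\<integral>\<^sup>+ s. indicator V w * indicator {0<..} s * B (x + s *\<^sub>R w) \<partial>lborel) \<le> indicator V w * (\<integral>\<^sup>+ s. indicator {0..<exit_time D x w} s *
      (\<integral>\<^sup>+ u. indicator V u * indicator A (x + s *\<^sub>R w, u) \<partial>lborel) \<partial>lborel)"
    proof (cases "w \<in> V")
      case True
      have "(\<integral>\<^sup>+ s. indicator {0<..} s * B (x + s *\<^sub>R w) \<partial>lborel) \<le> (\<integral>\<^sup>+ s. indicator {0..<exit_time D x w} s *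
      (\<integral>\<^sup>+ u. indicator V u * indicator A (x + s *\<^sub>R w, u) \<partial>lborel) \<partial>lborel)"
      proof (rule nn_integral_mono)
        fix s
        show "indicator {0<..} s * B (x + s *\<^sub>R w) \<le> indicator {0..<exit_time D x w} s *
          (\<integral>\<^sup>+ u. indicator V u * indicator A (x + s *\<^sub>R w, u) \<partial>lborel)"
        proof (cases "0 < s \<and> x + s *\<^sub>R w \<in> D")
          case True
          then have "s < exit_time D x w" using exit_gt[OF D R R0 V0[OF \<open>w \<in> V\<close>] x] by auto
          then show ?thesis using True by (simp add: BV)
        next
          case False
          then show ?thesis using B0 by (auto simp: indicator_def)
        qed
      qed
      then show ?thesis using True by simp
    qed simp
  qed
  moreover have "(\<integral>\<^sup>+ w. \<integral>\<^sup>+ s. indicator V w * indicator {0<..} s * B (x + s *\<^sub>R w) \<partial>lborel \<partial>lborel)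
     = (\<integral>\<^sup>+ s. \<integral>\<^sup>+ w. indicator V w * indicator {0<..} s * B (x + s *\<^sub>R w) \<partial>lborel \<partial>lborel)"
    by (rule lborel_pair.Fubini'[symmetric]) measurable
  moreover have "(\<integral>\<^sup>+ s. \<integral>\<^sup>+ w. indicator V w * indicator {0<..} s * B (x + s *\<^sub>R w) \<partial>lborel \<partial>lborel)
     = (\<integral>\<^sup>+ s. \<integral>\<^sup>+ y. indicator {0<..} s * ennreal (1/s^3) * indicator V ((1/s) *\<^sub>R (y - x)) * B y \<partial>lborel \<partial>lborel)"
  proof (rule nn_integral_cong)
    fix s :: real
    show "(\<integral>\<^sup>+ w. indicator V w * indicator {0<..} s * B (x + s *\<^sub>R w) \<partial>lborel) =
      (\<integral>\<^sup>+ y. indicator {0<..} s * ennreal (1/s^3) * indicator V ((1/s) *\<^sub>R (y - x)) * B y \<partial>lborel)"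
    proof (cases "0 < s")
      case True
      have "(\<integral>\<^sup>+ y. indicator V ((1/s) *\<^sub>R (y - x)) * B y \<partial>lborel)
          = ennreal (s^3) * (\<integral>\<^sup>+ w. indicator V ((1/s) *\<^sub>R (x + s *\<^sub>R w - x)) * B (x + s *\<^sub>R w) \<partial>lborel)"
        by (rule affine_subst) (use True in auto)
      also have "(\<lambda>w. indicator V ((1/s) *\<^sub>R (x + s *\<^sub>R w - x)) * B (x + s *\<^sub>R w)) = (\<lambda>w. indicator V w * B (x + s *\<^sub>R w))"
        using True by (simp add: fun_eq_iff)
      finally have eq: "(\<integral>\<^sup>+ y. indicator V ((1/s) *\<^sub>R (y - x)) * B y \<partial>lborel)
          = ennreal (s^3) * (\<integral>\<^sup>+ w. indicator V w * B (x + s *\<^sub>R w) \<partial>lborel)" .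
      have "(\<integral>\<^sup>+ y. indicator {0<..} s * ennreal (1/s^3) * indicator V ((1/s) *\<^sub>R (y - x)) * B y \<partial>lborel)
         = ennreal (1/s^3) * (\<integral>\<^sup>+ y. indicator V ((1/s) *\<^sub>R (y - x)) * B y \<partial>lborel)"
        using True by (subst nn_integral_cmult[symmetric]) (auto simp: mult.assoc)
      also have "\<dots> = (ennreal (1/s^3) * ennreal (s^3)) * (\<integral>\<^sup>+ w. indicator V w * B (x + s *\<^sub>R w) \<partial>lborel)"
        unfolding eq by (simp add: mult.assoc)
      also have "ennreal (1/s^3) * ennreal (s^3) = 1"
        using True by (simp add: ennreal_mult[symmetric])
      finally show ?thesis using True by (simp add: mult.commute)
    qed simp
  qed
  moreover have "(\<integral>\<^sup>+ s. \<integral>\<^sup>+ y. indicator {0<..} s * ennreal (1/s^3) * indicator V ((1/s) *\<^sub>R (y - x)) * B y \<partial>lborel \<partial>lborel)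
     = (\<integral>\<^sup>+ y. \<integral>\<^sup>+ s. indicator {0<..} s * ennreal (1/s^3) * indicator V ((1/s) *\<^sub>R (y - x)) * B y \<partial>lborel \<partial>lborel)"
    by (rule lborel_pair.Fubini'[symmetric]) measurable
  moreover have "(\<integral>\<^sup>+ y. ennreal c4 * B y \<partial>lborel)
     \<le> (\<integral>\<^sup>+ y. \<integral>\<^sup>+ s. indicator {0<..} s * ennreal (1/s^3) * indicator V ((1/s) *\<^sub>R (y - x)) * B y \<partial>lborel \<partial>lborel)"
  proof (rule nn_integral_mono_AE)
    show "AE y in lborel. ennreal c4 * B y \<le> (\<integral>\<^sup>+ s. indicator {0<..} s * ennreal (1/s^3) * indicator V ((1/s) *\<^sub>R (y - x)) * B y \<partial>lborel)"
    proof (rule eventually_mono[OF AE_lborel_singleton[of x]])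
      fix y :: "real^3" assume yx: "y \<noteq> x"
      show "ennreal c4 * B y \<le> (\<integral>\<^sup>+ s. indicator {0<..} s * ennreal (1/s^3) * indicator V ((1/s) *\<^sub>R (y - x)) * B y \<partial>lborel)"
      proof (cases "y \<in> D")
        case False then show ?thesis using B0 by simp
      next
        case True
        have z: "y - x \<noteq> 0" using yx by simp
        have nz: "norm (y - x) \<le> 2 * R"
          using R[OF True] R[OF x] norm_triangle_ineq4[of y x] by linarith
        have nz0: "0 < norm (y - x)" using z by simp
        have "c4 \<le> vmin^3 * (1/vmin - 1/vmax) / (norm (y - x))^2"
          unfolding c4_def
        proof (rule divide_left_mono)
          show "0 \<le> vmin^3 * (1/vmin - 1/vmax)" using vel by (simp add: frac_le)
          show "(norm (y - x))^2 \<le> (2*R)^2" using nz nz0 by (intro power_mono) auto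
          have "0 < R" using nz nz0 by linarith
          then show "0 < (2*R)^2 * (norm (y - x))^2" using nz0 by simp
        qed
        then have "ennreal c4 \<le> (\<integral>\<^sup>+ s. indicator {0<..} s * ennreal (1/s^3) * indicator V ((1/s) *\<^sub>R (y - x)) \<partial>lborel)"
          using W_bound[OF vel z] unfolding V_def by (meson ennreal_leI order_trans)
        then have "ennreal c4 * B y \<le> (\<integral>\<^sup>+ s. indicator {0<..} s * ennreal (1/s^3) * indicator V ((1/s) *\<^sub>R (y - x)) \<partial>lborel) * B y"
          by (rule mult_right_mono) simp
        also have "\<dots> = (\<integral>\<^sup>+ s. indicator {0<..} s * ennreal (1/s^3) * indicator V ((1/s) *\<^sub>R (y - x)) * B y \<partial>lborel)"
          by (rule nn_integral_multc[symmetric]) measurable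
        finally show ?thesis .
      qed
    qed
  qed
  moreover have "(\<integral>\<^sup>+ y. ennreal c4 * B y \<partial>lborel) = ennreal c4 * emeasure lborel A"
  proof -
    have "(\<integral>\<^sup>+ y. B y \<partial>lborel) = emeasure (lborel \<Otimes>\<^sub>M lborel) A"
    proof -
      have "A \<in> sets (lborel \<Otimes>\<^sub>M lborel)" unfolding lborel_prod by simp
      then show ?thesis unfolding B_def by (subst lborel.emeasure_pair_measure) auto
    qed
    then show ?thesis by (subst nn_integral_cmult) (auto simp: lborel_prod)
  qed
  ultimately show ?thesis unfolding V_def c4_def by simp
qed


locale nrw =
  fixes D V :: "(real^3) set" and vmin vmax Nmax C \<epsilon> R :: real
    and \<sigma>s \<sigma>f :: "real^3 \<Rightarrow> real^3 \<Rightarrow> real"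
    and \<pi>s \<pi>f :: "real^3 \<Rightarrow> real^3 \<Rightarrow> real^3 \<Rightarrow> real"
  assumes V_def: "V = Vset vmin vmax"
    and D: "open D" "convex D" "D \<noteq> {}"
    and R: "\<And>y. y \<in> D \<Longrightarrow> norm y \<le> R"
    and vel: "0 < vmin" "vmin < vmax"
    and meas: "set_borel_measurable borel (D \<times> V) (\<lambda>(r, v). \<sigma>s r v)"
              "set_borel_measurable borel (D \<times> V) (\<lambda>(r, v). \<sigma>f r v)"
              "set_borel_measurable borel (D \<times> V \<times> V) (\<lambda>(r, v, v'). \<pi>s r v v')"
              "set_borel_measurable borel (D \<times> V \<times> V) (\<lambda>(r, v, v'). \<pi>f r v v')"
    and nonneg: "\<And>r v. r \<in> D \<Longrightarrow> v \<in> V \<Longrightarrow> 0 \<le> \<sigma>s r v \<and> 0 \<le> \<sigma>f r v"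
                "\<And>r v v'. r \<in> D \<Longrightarrow> v \<in> V \<Longrightarrow> v' \<in> V \<Longrightarrow> 0 \<le> \<pi>s r v v' \<and> 0 \<le> \<pi>f r v v'"
    and norm_s: "\<And>r v. r \<in> D \<Longrightarrow> v \<in> V \<Longrightarrow> (LINT v':V|lborel. \<pi>s r v v') = 1"
    and C: "\<And>r v v'. r \<in> D \<Longrightarrow> v \<in> V \<Longrightarrow> v' \<in> V \<Longrightarrow>
               \<sigma>s r v \<le> C \<and> \<sigma>f r v \<le> C \<and> \<pi>s r v v' \<le> C \<and> \<pi>f r v v' \<le> C"
    and eps: "0 < \<epsilon>" "\<And>r v v'. r \<in> D \<Longrightarrow> v \<in> V \<Longrightarrow> v' \<in> V \<Longrightarrow> \<epsilon> \<le> \<sigma>f r v * \<pi>f r v v'"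
    and H4: "1 < Nmax" "\<And>r v. r \<in> D \<Longrightarrow> v \<in> V \<Longrightarrow> mean_offspring \<pi>f V r v \<le> Nmax"
begin

abbreviation "m \<equiv> mean_offspring \<pi>f V"
abbreviation "\<alpha> \<equiv> scat_rate \<sigma>s \<sigma>f m"
abbreviation "\<kappa> \<equiv> exit_time D"
abbreviation "scat \<equiv> scatter_step D V \<sigma>s \<sigma>f \<pi>s \<pi>f"
abbreviation "fiss \<equiv> fission_step D V \<sigma>s \<sigma>f \<pi>s \<pi>f Nmax"
abbreviation "kern \<equiv> fission_kernel D V \<sigma>s \<sigma>f \<pi>s \<pi>f Nmax"

definition "Ps = (\<lambda>p. indicator (D \<times> V \<times> V) p *\<^sub>R (case p of (r, v, v') \<Rightarrow> \<pi>s r v v'))"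
definition "Pf = (\<lambda>p. indicator (D \<times> V \<times> V) p *\<^sub>R (case p of (r, v, v') \<Rightarrow> \<pi>f r v v'))"
definition "Ss = (\<lambda>p. indicator (D \<times> V) p *\<^sub>R (case p of (r, v) \<Rightarrow> \<sigma>s r v))"
definition "Sf = (\<lambda>p. indicator (D \<times> V) p *\<^sub>R (case p of (r, v) \<Rightarrow> \<sigma>f r v))"

lemma Ps_m[measurable]: "Ps \<in> borel_measurable borel"
  using meas(3) unfolding Ps_def set_borel_measurable_def .
lemma Pf_m[measurable]: "Pf \<in> borel_measurable borel"
  using meas(4) unfolding Pf_def set_borel_measurable_def .
lemma Ss_m[measurable]: "Ss \<in> borel_measurable borel"
  using meas(1) unfolding Ss_def set_borel_measurable_def .
lemma Sf_m[measurable]: "Sf \<in> borel_measurable borel"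
  using meas(2) unfolding Sf_def set_borel_measurable_def .

lemma V_m[measurable]: "V \<in> sets borel" unfolding V_def by simp

lemma V0: "w \<in> V \<Longrightarrow> w \<noteq> 0" using vel unfolding V_def Vset_def by auto
lemma Vn: "w \<in> V \<Longrightarrow> vmin \<le> norm w" unfolding V_def Vset_def by auto

lemma R0: "0 \<le> R"
  using D(3) R by (meson equals0I norm_ge_zero order_trans)

lemma V_fin: "emeasure lborel V < \<infinity>"
proof -
  have "V \<subseteq> cball 0 vmax" unfolding V_def Vset_def by auto
  then have "emeasure lborel V \<le> emeasure lborel (cball (0::real^3) vmax)"
    by (intro emeasure_mono) auto
  also have "\<dots> < \<infinity>" using emeasure_bounded_finite[of "cball (0::real^3) vmax"] by simp
  finally show ?thesis .
qed

lemma V_pos: "0 < measure lborel V"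
proof -
  define c :: "real^3" where "c = ((vmin + vmax) / 2) *\<^sub>R (axis 1 1)"
  define \<delta> where "\<delta> = (vmax - vmin) / 2"
  have \<delta>0: "0 < \<delta>" using vel unfolding \<delta>_def by simp
  have nc: "norm c = (vmin + vmax) / 2" unfolding c_def using vel by simp
  have sub: "ball c \<delta> \<subseteq> V"
  proof
    fix y assume "y \<in> ball c \<delta>"
    then have "norm (y - c) < \<delta>" by (simp add: dist_norm norm_minus_commute)
    then have "norm y \<le> norm c + \<delta>" "norm c - \<delta> \<le> norm y"
      using norm_triangle_ineq2[of y c] norm_triangle_ineq3[of y c] norm_triangle_sub[of y c]
      by (smt (verit) norm_minus_commute norm_triangle_ineq2)+
    then show "y \<in> V" unfolding V_def Vset_def nc \<delta>_def by (auto simp: field_simps)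
  qed
  have "0 < measure lborel (ball c \<delta>)" using \<delta>0 content_ball_pos by blast
  also have "\<dots> \<le> measure lborel V"
    using sub V_fin by (intro measure_mono_fmeasurable) (auto simp: fmeasurable_def)
  finally show ?thesis .
qed

lemma C0: "0 < C"
proof -
  obtain r where r: "r \<in> D" using D(3) by auto
  obtain w where w: "w \<in> V" using V_pos by (metis emeasure_empty equals0I measure_empty less_irrefl)
  have "\<epsilon> \<le> \<sigma>f r w * \<pi>f r w w" using eps(2)[OF r w w] .
  moreover have "\<sigma>f r w * \<pi>f r w w \<le> C * C"
    using C[OF r w w] nonneg(1)[OF r w] nonneg(2)[OF r w w] by (intro mult_mono) auto
  ultimately have "0 < C * C" using eps(1) by linarith
  moreover have "0 \<le> C" using C[OF r w w] nonneg(1)[OF r w] by linarith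
  ultimately show ?thesis by (metis mult_zero_left order_le_less)
qed

lemma sf_low: "r \<in> D \<Longrightarrow> v \<in> V \<Longrightarrow> \<epsilon> / C \<le> \<sigma>f r v"
proof -
  assume r: "r \<in> D" and v: "v \<in> V"
  have "\<epsilon> \<le> \<sigma>f r v * \<pi>f r v v" using eps(2)[OF r v v] .
  also have "\<dots> \<le> \<sigma>f r v * C" using C[OF r v v] nonneg(1)[OF r v] by (intro mult_left_mono) auto
  finally show ?thesis using C0 by (simp add: field_simps)
qed

lemma pf_low: "r \<in> D \<Longrightarrow> v \<in> V \<Longrightarrow> v' \<in> V \<Longrightarrow> \<epsilon> / C \<le> \<pi>f r v v'"
proof -
  assume r: "r \<in> D" and v: "v \<in> V" and v': "v' \<in> V"
  have "\<epsilon> \<le> \<sigma>f r v * \<pi>f r v v'" using eps(2)[OF r v v'] .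
  also have "\<dots> \<le> C * \<pi>f r v v'" using C[OF r v v'] nonneg(2)[OF r v v'] by (intro mult_right_mono) auto
  finally show ?thesis using C0 by (simp add: field_simps mult.commute)
qed

end

context nrw begin

definition "m0 = (\<epsilon> / C) * measure lborel V"
definition "a0 = (\<epsilon> / C) * m0"
definition "a1 = C + C * Nmax"

lemma m0_pos: "0 < m0" unfolding m0_def using eps(1) C0 V_pos by simp
lemma a0_pos: "0 < a0" unfolding a0_def using eps(1) C0 m0_pos by simp

lemma pi_int:
  assumes x: "x \<in> D" and w: "w \<in> V"
  shows "set_integrable lborel V (\<pi>f x w)" "set_integrable lborel V (\<pi>s x w)"
proof -
  have ef: "(\<lambda>v'. indicator V v' *\<^sub>R \<pi>f x w v') = (\<lambda>v'. Pf (x, w, v'))"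
    using x w by (auto simp: Pf_def fun_eq_iff indicator_def)
  have es: "(\<lambda>v'. indicator V v' *\<^sub>R \<pi>s x w v') = (\<lambda>v'. Ps (x, w, v'))"
    using x w by (auto simp: Ps_def fun_eq_iff indicator_def)
  show "set_integrable lborel V (\<pi>f x w)"
    unfolding set_integrable_def ef
  proof (rule integrableI_bounded_set[where A=V and B=C])
    show "(\<lambda>v'. Pf (x, w, v')) \<in> borel_measurable lborel" by measurable
  qed (use V_fin C[OF x w] nonneg(2)[OF x w] C0 in \<open>auto simp: Pf_def indicator_def\<close>)
  show "set_integrable lborel V (\<pi>s x w)"
    unfolding set_integrable_def es
  proof (rule integrableI_bounded_set[where A=V and B=C])
    show "(\<lambda>v'. Ps (x, w, v')) \<in> borel_measurable lborel" by measurable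
  qed (use V_fin C[OF x w] nonneg(2)[OF x w] C0 in \<open>auto simp: Ps_def indicator_def\<close>)
qed

lemma m_eq: "x \<in> D \<Longrightarrow> w \<in> V \<Longrightarrow> m x w = integral\<^sup>L lborel (\<lambda>v'. Pf (x, w, v'))"
  unfolding mean_offspring_def set_lebesgue_integral_def
  by (intro arg_cong[where f="integral\<^sup>L lborel"]) (auto simp: Pf_def fun_eq_iff indicator_def)

lemma m_bounds:
  assumes x: "x \<in> D" and w: "w \<in> V"
  shows "m0 \<le> m x w" "m x w \<le> Nmax" "0 < m x w"
proof -
  have ci: "set_integrable lborel V (\<lambda>_. \<epsilon> / C)"
    unfolding set_integrable_def
    by (rule integrableI_bounded_set[where A=V and B="\<epsilon> / C"]) (use V_fin eps(1) C0 in auto)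
  have "(LINT v':V|lborel. \<epsilon> / C) \<le> (LINT v':V|lborel. \<pi>f x w v')"
    by (rule set_integral_mono[OF ci pi_int(1)[OF x w]]) (rule pf_low[OF x w])
  moreover have "(LINT v':V|lborel. \<epsilon> / C) = m0"
    unfolding m0_def using V_fin by (subst set_integral_const) (auto simp: mult.commute)
  ultimately show "m0 \<le> m x w" unfolding mean_offspring_def by simp
  show "m x w \<le> Nmax" using H4(2)[OF x w] .
  show "0 < m x w" using m0_pos \<open>m0 \<le> m x w\<close> by simp
qed

lemma alpha_bounds:
  assumes x: "x \<in> D" and w: "w \<in> V"
  shows "a0 \<le> \<alpha> x w" "\<alpha> x w \<le> a1" "\<sigma>f x w * m x w \<le> \<alpha> x w"
proof -
  have sf: "\<epsilon> / C \<le> \<sigma>f x w" using sf_low[OF x w] .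
  have mb: "m0 \<le> m x w" "m x w \<le> Nmax" "0 < m x w" using m_bounds[OF x w] by auto
  have nn: "0 \<le> \<sigma>s x w" "0 \<le> \<sigma>f x w" using nonneg(1)[OF x w] by auto
  have "a0 \<le> \<sigma>f x w * m x w" unfolding a0_def
    using sf mb eps(1) C0 m0_pos nn by (intro mult_mono) auto
  then show "a0 \<le> \<alpha> x w" using nn unfolding scat_rate_def by simp
  show "\<sigma>f x w * m x w \<le> \<alpha> x w" using nn unfolding scat_rate_def by simp
  have "\<sigma>f x w * m x w \<le> C * Nmax"
    using C[OF x w w] mb nn by (intro mult_mono) auto
  then show "\<alpha> x w \<le> a1" unfolding a1_def scat_rate_def using C[OF x w w] by simp
qed

lemma a0_le_a1: "a0 \<le> a1"
proof -
  obtain r where r: "r \<in> D" using D(3) by auto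
  obtain w where w: "w \<in> V" using V_pos by (metis emeasure_empty equals0I measure_empty less_irrefl)
  show ?thesis using alpha_bounds[OF r w] by simp
qed

lemma line_meas:
  assumes v: "v \<in> V"
  shows "set_borel_measurable lborel {0..<\<kappa> r v} (\<lambda>s. \<alpha> (r + s *\<^sub>R v) v)"
proof -
  define t where "t = \<kappa> r v"
  have fm: "(\<lambda>s. indicator {0..<t} s * (Ss (r + s *\<^sub>R v, v) + Sf (r + s *\<^sub>R v, v) *
       integral\<^sup>L lborel (\<lambda>v'. Pf (r + s *\<^sub>R v, v, v')))) \<in> borel_measurable lborel"
    by measurable
  have "(\<lambda>s. indicator {0..<t} s *\<^sub>R \<alpha> (r + s *\<^sub>R v) v) = (\<lambda>s. indicator {0..<t} s * (Ss (r + s *\<^sub>R v, v) + Sf (r + s *\<^sub>R v, v) *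
       integral\<^sup>L lborel (\<lambda>v'. Pf (r + s *\<^sub>R v, v, v'))))"
  proof
    fix s
    show "indicator {0..<t} s *\<^sub>R \<alpha> (r + s *\<^sub>R v) v = indicator {0..<t} s * (Ss (r + s *\<^sub>R v, v) + Sf (r + s *\<^sub>R v, v) *
       integral\<^sup>L lborel (\<lambda>v'. Pf (r + s *\<^sub>R v, v, v')))"
    proof (cases "s \<in> {0..<t}")
      case True
      then have x: "r + s *\<^sub>R v \<in> D" using exit_in unfolding t_def by auto
      show ?thesis using True x v by (simp add: m_eq Ss_def Sf_def scat_rate_def)
    qed simp
  qed
  with fm show ?thesis unfolding set_borel_measurable_def t_def by simp
qed

lemma lint_bounds:
  assumes v: "v \<in> V" and s: "0 \<le> s" "s < \<kappa> r v"
  shows "0 \<le> (LINT u:{0..s}|lborel. \<alpha> (r + u *\<^sub>R v) v)"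
        "(LINT u:{0..s}|lborel. \<alpha> (r + u *\<^sub>R v) v) \<le> a1 * s"
proof -
  have inD: "r + u *\<^sub>R v \<in> D" if "u \<in> {0..s}" for u using exit_in[where s=u and r=r and v=v and D=D] that s by auto
  show "0 \<le> (LINT u:{0..s}|lborel. \<alpha> (r + u *\<^sub>R v) v)"
    unfolding set_lebesgue_integral_def
    by (rule integral_nonneg_AE) (use inD alpha_bounds[OF _ v] a0_pos in \<open>auto simp: indicator_def
         intro!: AE_I2 simp del: scat_rate_def\<close>, smt (verit, best) a0_pos)
  have \<gamma>m: "(\<lambda>u. indicator {0..<\<kappa> r v} u *\<^sub>R \<alpha> (r + u *\<^sub>R v) v) \<in> borel_measurable lborel"
    using line_meas[OF v] unfolding set_borel_measurable_def .
  have eq: "(\<lambda>u. indicator {0..s} u *\<^sub>R \<alpha> (r + u *\<^sub>R v) v) = (\<lambda>u. indicator {0..s} u * (indicator {0..<\<kappa> r v} u *\<^sub>R \<alpha> (r + u *\<^sub>R v) v))"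
    using s by (auto simp: fun_eq_iff indicator_def)
  have int: "integrable lborel (\<lambda>u. indicator {0..s} u *\<^sub>R \<alpha> (r + u *\<^sub>R v) v)"
    unfolding eq
  proof (rule integrableI_bounded_set[where A="{0..s}" and B=a1])
    show "(\<lambda>u. indicator {0..s} u * (indicator {0..<\<kappa> r v} u *\<^sub>R \<alpha> (r + u *\<^sub>R v) v)) \<in> borel_measurable lborel"
      using \<gamma>m by measurable
  next
    have abs_al: "\<bar>\<alpha> x v\<bar> \<le> a1" if "x \<in> D" for x
      using alpha_bounds[OF that v] a0_pos by (smt (verit))
    show "AE x in lborel. x \<in> {0..s} \<longrightarrow> norm (indicator {0..s} x * (indicator {0..<\<kappa> r v} x *\<^sub>R \<alpha> (r + x *\<^sub>R v) v)) \<le> a1"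
      using inD abs_al s by (intro AE_I2) (auto simp: indicator_def)
  qed (use inD alpha_bounds[OF _ v] a0_pos s in \<open>auto simp: indicator_def\<close>)
  have "(LINT u:{0..s}|lborel. \<alpha> (r + u *\<^sub>R v) v) \<le> integral\<^sup>L lborel (\<lambda>u. indicator {0..s} u * a1)"
    unfolding set_lebesgue_integral_def
  proof (rule integral_mono[OF int])
    show "integrable lborel (\<lambda>u. indicator {0..s} u * a1)"
      using s by (simp add: integrable_indicator_iff)
  qed (use inD alpha_bounds[OF _ v] s in \<open>auto simp: indicator_def\<close>)
  also have "\<dots> = a1 * s" using s by simp
  finally show "(LINT u:{0..s}|lborel. \<alpha> (r + u *\<^sub>R v) v) \<le> a1 * s" .
qed

end

lemma ennreal_inverse_antimono:
  fixes b c :: ennreal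
  assumes "b \<le> c" shows "inverse c \<le> inverse b"
proof (cases "b = 0")
  case True then show ?thesis by simp
next
  case False
  show ?thesis
  proof (cases "c = top")
    case True then show ?thesis by simp
  next
    case ct: False
    then have "b \<noteq> top" using assms by (auto simp: top_unique)
    then obtain b' where b': "b = ennreal b'" "0 \<le> b'" by (cases b) auto
    obtain c' where c': "c = ennreal c'" "0 \<le> c'" using ct by (cases c) auto
    have "0 < b'" using False b' by (cases "b' = 0") auto
    moreover have "b' \<le> c'" using assms b' c' by (simp add: ennreal_le_iff)
    ultimately show ?thesis using b' c' by (simp add: inverse_ennreal ennreal_leI le_imp_inverse_le)
  qed
qed

lemma ennreal_divide_antimono:
  fixes a b c :: ennreal
  assumes "b \<le> c" shows "a / c \<le> a / b"
  unfolding divide_ennreal_def using ennreal_inverse_antimono[OF assms] by (rule mult_left_mono) simp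

context nrw begin

definition "T = (2 * R + 1) / vmin"
definition "Dn r v = (\<integral>\<^sup>+ s. indicator {0..<\<kappa> r v} s * ennreal (first_event_density \<alpha> r v s) \<partial>lborel)"

lemma T_pos: "0 < T" unfolding T_def using R0 vel by simp

lemma kappa_le: "r \<in> D \<Longrightarrow> v \<in> V \<Longrightarrow> \<kappa> r v \<le> T"
proof -
  assume r: "r \<in> D" and v: "v \<in> V"
  have "\<kappa> r v \<le> (R + norm r + 1) / norm v" by (rule exit_le[OF R R0 V0[OF v]])
  also have "\<dots> \<le> (2 * R + 1) / vmin"
    using R[OF r] Vn[OF v] vel R0 by (intro frac_le) auto
  finally show ?thesis unfolding T_def .
qed

lemma dens_bounds:
  assumes v: "v \<in> V" and s: "0 \<le> s" "s < \<kappa> r v"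
  shows "0 \<le> first_event_density \<alpha> r v s" "first_event_density \<alpha> r v s \<le> a1"
    "r \<in> D \<Longrightarrow> a0 * exp (- (a1 * T)) \<le> first_event_density \<alpha> r v s"
proof -
  have x: "r + s *\<^sub>R v \<in> D" using exit_in s by blast
  note ab = alpha_bounds[OF x v]
  note lb = lint_bounds[OF v s]
  have e1: "exp (- (LINT u:{0..s}|lborel. \<alpha> (r + u *\<^sub>R v) v)) \<le> 1" using lb by simp
  show "0 \<le> first_event_density \<alpha> r v s"
    unfolding first_event_density_def using ab a0_pos by simp
  show "first_event_density \<alpha> r v s \<le> a1"
  proof -
    have "\<alpha> (r + s *\<^sub>R v) v * exp (- (LINT u:{0..s}|lborel. \<alpha> (r + u *\<^sub>R v) v)) \<le> \<alpha> (r + s *\<^sub>R v) v"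
      using ab a0_pos e1 by (intro mult_left_le) auto
    then show ?thesis unfolding first_event_density_def using ab by linarith
  qed
  assume r: "r \<in> D"
  have a1p: "0 \<le> a1" using a0_pos a0_le_a1 by simp
  have "a1 * s \<le> a1 * T" using kappa_le[OF r v] s a1p by (intro mult_left_mono) auto
  then have "exp (- (a1 * T)) \<le> exp (- (LINT u:{0..s}|lborel. \<alpha> (r + u *\<^sub>R v) v))"
    using lb by simp
  then show "a0 * exp (- (a1 * T)) \<le> first_event_density \<alpha> r v s"
    unfolding first_event_density_def using ab a0_pos by (intro mult_mono) auto
qed

lemma Dn_le1: "v \<in> V \<Longrightarrow> Dn r v \<le> 1"
  unfolding Dn_def first_event_density_def
proof (rule exp_density_le1)
  assume v: "v \<in> V"
  show "set_borel_measurable lborel {0..<\<kappa> r v} (\<lambda>s. \<alpha> (r + s *\<^sub>R v) v)" by (rule line_meas[OF v])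
  fix u assume u: "0 \<le> u" "u < \<kappa> r v"
  have x: "r + u *\<^sub>R v \<in> D" using exit_in u by blast
  show "0 \<le> \<alpha> (r + u *\<^sub>R v) v \<and> \<alpha> (r + u *\<^sub>R v) v \<le> a1" using alpha_bounds[OF x v] a0_pos by simp
qed

lemma kappa_pos: "r \<in> D \<Longrightarrow> v \<in> V \<Longrightarrow> 0 < \<kappa> r v"
  by (rule exit_pos[OF D(1,2) R R0 V0])

lemma Dn_le: "r \<in> D \<Longrightarrow> v \<in> V \<Longrightarrow> Dn r v \<le> ennreal (a1 * \<kappa> r v)"
proof -
  assume r: "r \<in> D" and v: "v \<in> V"
  have "Dn r v \<le> (\<integral>\<^sup>+ s. ennreal a1 * indicator {0..<\<kappa> r v} s \<partial>lborel)"
    unfolding Dn_def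
  proof (rule nn_integral_mono)
    fix s show "indicator {0..<\<kappa> r v} s * ennreal (first_event_density \<alpha> r v s) \<le> ennreal a1 * indicator {0..<\<kappa> r v} s"
      using dens_bounds(2)[OF v, of s r] by (auto simp: indicator_def ennreal_leI)
  qed
  also have "\<dots> = ennreal (a1 * \<kappa> r v)"
    using kappa_pos[OF r v] a0_pos a0_le_a1 by (subst nn_integral_cmult_indicator) (auto simp: ennreal_mult)
  finally show ?thesis .
qed

lemma IS: "x \<in> D \<Longrightarrow> w \<in> V \<Longrightarrow> (\<integral>\<^sup>+ v'. indicator V v' * ennreal (\<pi>s x w v') \<partial>lborel) = 1"
proof -
  assume x: "x \<in> D" and w: "w \<in> V"
  have "(\<integral>\<^sup>+ v'. indicator V v' * ennreal (\<pi>s x w v') \<partial>lborel) = (\<integral>\<^sup>+ v'. ennreal (indicator V v' *\<^sub>R \<pi>s x w v') \<partial>lborel)"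
    by (intro nn_integral_cong) (auto simp: indicator_def)
  also have "\<dots> = ennreal (LINT v':V|lborel. \<pi>s x w v')"
    unfolding set_lebesgue_integral_def
    by (rule nn_integral_eq_integral) (use pi_int(2)[OF x w] nonneg(2)[OF x w] in \<open>auto simp: set_integrable_def indicator_def\<close>)
  also have "\<dots> = 1" using norm_s[OF x w] by simp
  finally show ?thesis .
qed

lemma IF: "x \<in> D \<Longrightarrow> w \<in> V \<Longrightarrow> (\<integral>\<^sup>+ v'. indicator V v' * ennreal (\<pi>f x w v' / m x w) \<partial>lborel) = 1"
proof -
  assume x: "x \<in> D" and w: "w \<in> V"
  have mp: "0 < m x w" using m_bounds[OF x w] by simp
  have "(\<integral>\<^sup>+ v'. indicator V v' * ennreal (\<pi>f x w v' / m x w) \<partial>lborel) = (\<integral>\<^sup>+ v'. ennreal ((indicator V v' *\<^sub>R \<pi>f x w v') / m x w) \<partial>lborel)"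
    by (intro nn_integral_cong) (auto simp: indicator_def)
  also have "\<dots> = ennreal (integral\<^sup>L lborel (\<lambda>v'. (indicator V v' *\<^sub>R \<pi>f x w v') / m x w))"
    by (rule nn_integral_eq_integral)
       (use pi_int(1)[OF x w] nonneg(2)[OF x w] mp in \<open>auto simp: set_integrable_def indicator_def\<close>)
  also have "integral\<^sup>L lborel (\<lambda>v'. (indicator V v' *\<^sub>R \<pi>f x w v') / m x w) = m x w / m x w"
    by (simp add: mean_offspring_def set_lebesgue_integral_def)
  also have "\<dots> = 1" using mp by simp
  finally show ?thesis by simp
qed

end

lemma comb_le:
  fixes If Is :: ennreal
  assumes "0 \<le> dd" "0 \<le> ps" "0 \<le> pf" "0 \<le> pm" "pm \<le> 1" "ps + pf \<le> 1" "If \<le> 1" "Is \<le> 1"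
  shows "ennreal dd * ennreal pf * ennreal pm * If + ennreal dd * ennreal ps * Is \<le> ennreal dd"
proof -
  have "ennreal dd * ennreal pf * ennreal pm * If + ennreal dd * ennreal ps * Is
     \<le> ennreal dd * ennreal pf * ennreal pm * 1 + ennreal dd * ennreal ps * 1"
    using assms by (intro add_mono mult_left_mono) auto
  also have "\<dots> = ennreal (dd * pf * pm + dd * ps)"
    using assms by (simp add: ennreal_mult)
  also have "\<dots> \<le> ennreal dd"
  proof (rule ennreal_leI)
    have "pf * pm \<le> pf" using assms by (simp add: mult_left_le)
    then have "dd * (pf * pm) + dd * ps \<le> dd * pf + dd * ps"
      using assms by (simp add: mult_left_mono)
    also have "\<dots> = dd * (ps + pf)" by (simp add: algebra_simps)
    also have "\<dots> \<le> dd" using assms by (simp add: mult_left_le)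
    finally show "dd * pf * pm + dd * ps \<le> dd" by (simp add: mult.assoc)
  qed
  finally show ?thesis .
qed

context nrw begin

lemma inner_le1:
  assumes x: "x \<in> D" and w: "w \<in> V" and g: "\<And>v'. v' \<in> V \<Longrightarrow> g x v' \<le> 1"
  shows "(\<integral>\<^sup>+ v'. indicator V v' * ennreal (\<pi>f x w v' / m x w) * g x v' \<partial>lborel) \<le> 1"
        "(\<integral>\<^sup>+ v'. indicator V v' * ennreal (\<pi>s x w v') * g x v' \<partial>lborel) \<le> 1"
proof -
  have "(\<integral>\<^sup>+ v'. indicator V v' * ennreal (\<pi>f x w v' / m x w) * g x v' \<partial>lborel)
     \<le> (\<integral>\<^sup>+ v'. indicator V v' * ennreal (\<pi>f x w v' / m x w) \<partial>lborel)"
    by (rule nn_integral_mono) (auto simp: indicator_def intro: mult_left_le g)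
  then show "(\<integral>\<^sup>+ v'. indicator V v' * ennreal (\<pi>f x w v' / m x w) * g x v' \<partial>lborel) \<le> 1"
    using IF[OF x w] by simp
  have "(\<integral>\<^sup>+ v'. indicator V v' * ennreal (\<pi>s x w v') * g x v' \<partial>lborel)
     \<le> (\<integral>\<^sup>+ v'. indicator V v' * ennreal (\<pi>s x w v') \<partial>lborel)"
    by (rule nn_integral_mono) (auto simp: indicator_def intro: mult_left_le g)
  then show "(\<integral>\<^sup>+ v'. indicator V v' * ennreal (\<pi>s x w v') * g x v' \<partial>lborel) \<le> 1"
    using IS[OF x w] by simp
qed

lemma U1:
  assumes v: "v \<in> V" and g: "\<And>x w. x \<in> D \<Longrightarrow> w \<in> V \<Longrightarrow> g x w \<le> 1"
    and h: "\<And>x w. x \<in> D \<Longrightarrow> w \<in> V \<Longrightarrow> h x w \<le> 1"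
  shows "fiss g r v + scat h r v \<le> Dn r v"
  unfolding scatter_step_def fission_step_def Let_def Dn_def
proof (rule order_trans[OF nn_integral_superadd], rule nn_integral_mono)
  fix s
  show "indicator {0..<\<kappa> r v} s *
       (ennreal (first_event_density \<alpha> r v s) * ennreal (\<sigma>f (r + s *\<^sub>R v) v * m (r + s *\<^sub>R v) v / \<alpha> (r + s *\<^sub>R v) v) *
        ennreal (m (r + s *\<^sub>R v) v / Nmax) *
        (\<integral>\<^sup>+ v'. indicator V v' * ennreal (\<pi>f (r + s *\<^sub>R v) v v' / m (r + s *\<^sub>R v) v) * g (r + s *\<^sub>R v) v' \<partial>lborel)) +
       indicator {0..<\<kappa> r v} s *
       (ennreal (first_event_density \<alpha> r v s) * ennreal (\<sigma>s (r + s *\<^sub>R v) v / \<alpha> (r + s *\<^sub>R v) v) *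
        (\<integral>\<^sup>+ v'. indicator V v' * ennreal (\<pi>s (r + s *\<^sub>R v) v v') * h (r + s *\<^sub>R v) v' \<partial>lborel))
       \<le> indicator {0..<\<kappa> r v} s * ennreal (first_event_density \<alpha> r v s)"
  proof (cases "s \<in> {0..<\<kappa> r v}")
    case True
    define x where "x = r + s *\<^sub>R v"
    have x: "x \<in> D" using exit_in True unfolding x_def by auto
    have ab: "a0 \<le> \<alpha> x v" using alpha_bounds[OF x v] by simp
    have mb: "0 < m x v" "m x v \<le> Nmax" using m_bounds[OF x v] by auto
    have nn: "0 \<le> \<sigma>s x v" "0 \<le> \<sigma>f x v" using nonneg(1)[OF x v] by auto
    have ap: "0 < \<alpha> x v" using ab a0_pos by simp
    have sum1: "\<sigma>s x v / \<alpha> x v + \<sigma>f x v * m x v / \<alpha> x v \<le> 1"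
      using ap by (simp add: add_divide_distrib[symmetric] scat_rate_def)
    have "ennreal (first_event_density \<alpha> r v s) * ennreal (\<sigma>f x v * m x v / \<alpha> x v) * ennreal (m x v / Nmax) *
        (\<integral>\<^sup>+ v'. indicator V v' * ennreal (\<pi>f x v v' / m x v) * g x v' \<partial>lborel) +
        ennreal (first_event_density \<alpha> r v s) * ennreal (\<sigma>s x v / \<alpha> x v) *
        (\<integral>\<^sup>+ v'. indicator V v' * ennreal (\<pi>s x v v') * h x v' \<partial>lborel) \<le> ennreal (first_event_density \<alpha> r v s)"
    proof (rule comb_le)
      show "0 \<le> first_event_density \<alpha> r v s" using dens_bounds(1)[OF v] True by auto
      show "0 \<le> \<sigma>s x v / \<alpha> x v" using nn ap by simp
      show "0 \<le> \<sigma>f x v * m x v / \<alpha> x v" using nn ap mb by simp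
      show "0 \<le> m x v / Nmax" using mb H4(1) by simp
      show "m x v / Nmax \<le> 1" using mb H4(1) by simp
      show "\<sigma>s x v / \<alpha> x v + \<sigma>f x v * m x v / \<alpha> x v \<le> 1" by (rule sum1)
      show "(\<integral>\<^sup>+ v'. indicator V v' * ennreal (\<pi>f x v v' / m x v) * g x v' \<partial>lborel) \<le> 1"
        by (rule inner_le1(1)[where g=g, OF x v g[OF x]])
      show "(\<integral>\<^sup>+ v'. indicator V v' * ennreal (\<pi>s x v v') * h x v' \<partial>lborel) \<le> 1"
        by (rule inner_le1(2)[where g=h, OF x v h[OF x]])
    qed
    then show ?thesis using True unfolding x_def by simp
  qed simp
qed

lemma scat_add: "scat h1 r v + scat h2 r v \<le> scat (\<lambda>x w. h1 x w + h2 x w) r v"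
  unfolding scatter_step_def Let_def
proof (rule order_trans[OF nn_integral_superadd], rule nn_integral_mono)
  fix s
  define x where "x = r + s *\<^sub>R v"
  define c where "c = indicator {0..<\<kappa> r v} s * (ennreal (first_event_density \<alpha> r v s) * ennreal (\<sigma>s x v / \<alpha> x v))"
  have sup: "(\<integral>\<^sup>+ v'. indicator V v' * ennreal (\<pi>s x v v') * h1 x v' \<partial>lborel) + (\<integral>\<^sup>+ v'. indicator V v' * ennreal (\<pi>s x v v') * h2 x v' \<partial>lborel)
     \<le> (\<integral>\<^sup>+ v'. indicator V v' * ennreal (\<pi>s x v v') * (h1 x v' + h2 x v') \<partial>lborel)"
    by (rule order_trans[OF nn_integral_superadd]) (simp add: distrib_left)
  have "c * (\<integral>\<^sup>+ v'. indicator V v' * ennreal (\<pi>s x v v') * h1 x v' \<partial>lborel) + c * (\<integral>\<^sup>+ v'. indicator V v' * ennreal (\<pi>s x v v') * h2 x v' \<partial>lborel)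
     \<le> c * (\<integral>\<^sup>+ v'. indicator V v' * ennreal (\<pi>s x v v') * (h1 x v' + h2 x v') \<partial>lborel)"
    unfolding distrib_left[symmetric] by (rule mult_left_mono[OF sup]) simp
  then show "indicator {0..<\<kappa> r v} s *
       (ennreal (first_event_density \<alpha> r v s) * ennreal (\<sigma>s (r + s *\<^sub>R v) v / \<alpha> (r + s *\<^sub>R v) v) *
        (\<integral>\<^sup>+ v'. indicator V v' * ennreal (\<pi>s (r + s *\<^sub>R v) v v') * h1 (r + s *\<^sub>R v) v' \<partial>lborel)) +
       indicator {0..<\<kappa> r v} s *
       (ennreal (first_event_density \<alpha> r v s) * ennreal (\<sigma>s (r + s *\<^sub>R v) v / \<alpha> (r + s *\<^sub>R v) v) *
        (\<integral>\<^sup>+ v'. indicator V v' * ennreal (\<pi>s (r + s *\<^sub>R v) v v') * h2 (r + s *\<^sub>R v) v' \<partial>lborel))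
       \<le> indicator {0..<\<kappa> r v} s *
          (ennreal (first_event_density \<alpha> r v s) * ennreal (\<sigma>s (r + s *\<^sub>R v) v / \<alpha> (r + s *\<^sub>R v) v) *
           (\<integral>\<^sup>+ v'. indicator V v' * ennreal (\<pi>s (r + s *\<^sub>R v) v v') * (h1 (r + s *\<^sub>R v) v' + h2 (r + s *\<^sub>R v) v') \<partial>lborel))"
    unfolding c_def x_def by (simp add: mult.assoc)
qed

lemma scat_sum: fixes n :: nat shows "(\<Sum>k<n. scat (f k) r v) \<le> scat (\<lambda>x w. \<Sum>k<n. f k x w) r v"
proof (induction n arbitrary: r v)
  case 0 then show ?case by simp
next
  case (Suc n)
  have "(\<Sum>k<Suc n. scat (f k) r v) = (\<Sum>k<n. scat (f k) r v) + scat (f n) r v" by simp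
  also have "\<dots> \<le> scat (\<lambda>x w. \<Sum>k<n. f k x w) r v + scat (f n) r v"
    using Suc by (intro add_mono) auto
  also have "\<dots> \<le> scat (\<lambda>x w. (\<Sum>k<n. f k x w) + f n x w) r v" by (rule scat_add)
  finally show ?case by simp
qed

lemma scat_mono:
  assumes "\<And>x w. x \<in> D \<Longrightarrow> w \<in> V \<Longrightarrow> h1 x w \<le> h2 x w"
  shows "scat h1 r v \<le> scat h2 r v"
  unfolding scatter_step_def Let_def
proof (rule nn_integral_mono)
  fix s
  show "indicator {0..<\<kappa> r v} s *
       (ennreal (first_event_density \<alpha> r v s) * ennreal (\<sigma>s (r + s *\<^sub>R v) v / \<alpha> (r + s *\<^sub>R v) v) *
        (\<integral>\<^sup>+ v'. indicator V v' * ennreal (\<pi>s (r + s *\<^sub>R v) v v') * h1 (r + s *\<^sub>R v) v' \<partial>lborel))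
       \<le> indicator {0..<\<kappa> r v} s *
          (ennreal (first_event_density \<alpha> r v s) * ennreal (\<sigma>s (r + s *\<^sub>R v) v / \<alpha> (r + s *\<^sub>R v) v) *
           (\<integral>\<^sup>+ v'. indicator V v' * ennreal (\<pi>s (r + s *\<^sub>R v) v v') * h2 (r + s *\<^sub>R v) v' \<partial>lborel))"
  proof (cases "s \<in> {0..<\<kappa> r v}")
    case True
    then have x: "r + s *\<^sub>R v \<in> D" using exit_in by auto
    have "(\<integral>\<^sup>+ v'. indicator V v' * ennreal (\<pi>s (r + s *\<^sub>R v) v v') * h1 (r + s *\<^sub>R v) v' \<partial>lborel)
       \<le> (\<integral>\<^sup>+ v'. indicator V v' * ennreal (\<pi>s (r + s *\<^sub>R v) v v') * h2 (r + s *\<^sub>R v) v' \<partial>lborel)"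
      by (rule nn_integral_mono) (auto simp: indicator_def intro!: mult_left_mono assms[OF x])
    then show ?thesis by (intro mult_left_mono) auto
  qed simp
qed

lemma fiss_mono:
  assumes "\<And>x w. x \<in> D \<Longrightarrow> w \<in> V \<Longrightarrow> h1 x w \<le> h2 x w"
  shows "fiss h1 r v \<le> fiss h2 r v"
  unfolding fission_step_def Let_def
proof (rule nn_integral_mono)
  fix s
  show "indicator {0..<\<kappa> r v} s *
       (ennreal (first_event_density \<alpha> r v s) * ennreal (\<sigma>f (r + s *\<^sub>R v) v * m (r + s *\<^sub>R v) v / \<alpha> (r + s *\<^sub>R v) v) *
        ennreal (m (r + s *\<^sub>R v) v / Nmax) *
        (\<integral>\<^sup>+ v'. indicator V v' * ennreal (\<pi>f (r + s *\<^sub>R v) v v' / m (r + s *\<^sub>R v) v) * h1 (r + s *\<^sub>R v) v' \<partial>lborel))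
       \<le> indicator {0..<\<kappa> r v} s *
          (ennreal (first_event_density \<alpha> r v s) * ennreal (\<sigma>f (r + s *\<^sub>R v) v * m (r + s *\<^sub>R v) v / \<alpha> (r + s *\<^sub>R v) v) *
           ennreal (m (r + s *\<^sub>R v) v / Nmax) *
           (\<integral>\<^sup>+ v'. indicator V v' * ennreal (\<pi>f (r + s *\<^sub>R v) v v' / m (r + s *\<^sub>R v) v) * h2 (r + s *\<^sub>R v) v' \<partial>lborel))"
  proof (cases "s \<in> {0..<\<kappa> r v}")
    case True
    then have x: "r + s *\<^sub>R v \<in> D" using exit_in by auto
    have "(\<integral>\<^sup>+ v'. indicator V v' * ennreal (\<pi>f (r + s *\<^sub>R v) v v' / m (r + s *\<^sub>R v) v) * h1 (r + s *\<^sub>R v) v' \<partial>lborel)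
       \<le> (\<integral>\<^sup>+ v'. indicator V v' * ennreal (\<pi>f (r + s *\<^sub>R v) v v' / m (r + s *\<^sub>R v) v) * h2 (r + s *\<^sub>R v) v' \<partial>lborel)"
      by (rule nn_integral_mono) (auto simp: indicator_def intro!: mult_left_mono assms[OF x])
    then show ?thesis by (intro mult_left_mono) auto
  qed simp
qed

end

context nrw begin

lemma sfm_low: "x \<in> D \<Longrightarrow> w \<in> V \<Longrightarrow> a0 \<le> \<sigma>f x w * m x w"
proof -
  assume x: "x \<in> D" and w: "w \<in> V"
  have sf: "\<epsilon> / C \<le> \<sigma>f x w" using sf_low[OF x w] .
  have mb: "m0 \<le> m x w" using m_bounds[OF x w] by auto
  show ?thesis unfolding a0_def
    using sf mb eps(1) C0 m0_pos nonneg(1)[OF x w] by (intro mult_mono) auto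
qed

lemma scat_pow_mono:
  assumes "\<And>x w. x \<in> D \<Longrightarrow> w \<in> V \<Longrightarrow> h1 x w \<le> h2 x w"
  shows "x \<in> D \<Longrightarrow> w \<in> V \<Longrightarrow> (scat ^^ k) h1 x w \<le> (scat ^^ k) h2 x w"
proof (induction k arbitrary: x w)
  case 0 then show ?case using assms by simp
next
  case (Suc k)
  show ?case using scat_mono[of "(scat ^^ k) h1" "(scat ^^ k) h2" x w] Suc.IH by simp
qed

lemma kern_mono:
  assumes "\<And>x w. x \<in> D \<Longrightarrow> w \<in> V \<Longrightarrow> g1 x w \<le> g2 x w" and r: "r \<in> D" and v: "v \<in> V"
  shows "kern g1 r v \<le> kern g2 r v"
  unfolding fission_kernel_def
proof (rule suminf_le)
  fix k
  show "(scat ^^ k) (fiss g1) r v \<le> (scat ^^ k) (fiss g2) r v"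
    by (rule scat_pow_mono[OF _ r v]) (rule fiss_mono[OF assms(1)])
qed auto

lemma kern_ge: "fiss g r v \<le> kern g r v"
proof -
  have "(\<Sum>k\<in>{0}. (scat ^^ k) (fiss g) r v) \<le> (\<Sum>k. (scat ^^ k) (fiss g) r v)"
    by (rule sum_le_suminf) auto
  then show ?thesis unfolding fission_kernel_def by simp
qed

lemma U3:
  assumes g: "\<And>x w. x \<in> D \<Longrightarrow> w \<in> V \<Longrightarrow> g x w \<le> 1" and v: "v \<in> V"
  shows "kern g r v \<le> Dn r v"
proof -
  define G where "G n r v = (\<Sum>k<n. (scat ^^ k) (fiss g) r v)" for n r v
  have G: "\<And>r v. v \<in> V \<Longrightarrow> G n r v \<le> Dn r v" for n
  proof (induction n)
    case 0 then show ?case by (simp add: G_def)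
  next
    case (Suc n)
    fix r v assume v: "v \<in> V"
    have "G (Suc n) r v = fiss g r v + (\<Sum>k<n. scat ((scat ^^ k) (fiss g)) r v)"
      unfolding G_def by (simp only: sum.lessThan_Suc_shift funpow.simps comp_apply id_apply)
    also have "\<dots> \<le> fiss g r v + scat (\<lambda>x w. G n x w) r v"
      unfolding G_def by (intro add_mono order_refl scat_sum)
    also have "\<dots> \<le> Dn r v"
    proof (rule U1[OF v g])
      fix x w assume "x \<in> D" "w \<in> V"
      then show "G n x w \<le> 1" using Suc.IH[of w x] Dn_le1[of w x] by simp
    qed
    finally show "G (Suc n) r v \<le> Dn r v" .
  qed
  show ?thesis unfolding fission_kernel_def
    by (rule suminf_le_const) (use G[OF v] in \<open>auto simp: G_def\<close>)
qed

definition "c0 = a0 * exp (- (a1 * T)) * (a0 / a1) * (m0 / Nmax)"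
definition "c2 = (\<epsilon> / C) / Nmax"

lemma a1_pos: "0 < a1" using a0_pos a0_le_a1 by simp
lemma c0_pos: "0 < c0" unfolding c0_def using a0_pos a1_pos m0_pos H4(1) by simp
lemma c2_pos: "0 < c2" unfolding c2_def using eps(1) C0 H4(1) by simp

lemma N1:
  assumes r: "r \<in> D" and v: "v \<in> V"
  shows "ennreal c0 * ennreal c2 * (\<integral>\<^sup>+ s. indicator {0..<\<kappa> r v} s * (\<integral>\<^sup>+ w. indicator V w * g (r + s *\<^sub>R v) w \<partial>lborel) \<partial>lborel)
    \<le> fiss g r v"
proof -
  have "ennreal c0 * ennreal c2 * (\<integral>\<^sup>+ s. indicator {0..<\<kappa> r v} s * (\<integral>\<^sup>+ w. indicator V w * g (r + s *\<^sub>R v) w \<partial>lborel) \<partial>lborel)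
     \<le> (\<integral>\<^sup>+ s. ennreal c0 * ennreal c2 * (indicator {0..<\<kappa> r v} s * (\<integral>\<^sup>+ w. indicator V w * g (r + s *\<^sub>R v) w \<partial>lborel)) \<partial>lborel)"
    by (rule nn_integral_cmult_ge)
  also have "\<dots> \<le> fiss g r v"
    unfolding fission_step_def Let_def
  proof (rule nn_integral_mono)
    fix s
    show "ennreal c0 * ennreal c2 * (indicator {0..<\<kappa> r v} s * (\<integral>\<^sup>+ w. indicator V w * g (r + s *\<^sub>R v) w \<partial>lborel))
       \<le> indicator {0..<\<kappa> r v} s *
          (ennreal (first_event_density \<alpha> r v s) * ennreal (\<sigma>f (r + s *\<^sub>R v) v * m (r + s *\<^sub>R v) v / \<alpha> (r + s *\<^sub>R v) v) *
           ennreal (m (r + s *\<^sub>R v) v / Nmax) *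
           (\<integral>\<^sup>+ v'. indicator V v' * ennreal (\<pi>f (r + s *\<^sub>R v) v v' / m (r + s *\<^sub>R v) v) * g (r + s *\<^sub>R v) v' \<partial>lborel))"
    proof (cases "s \<in> {0..<\<kappa> r v}")
      case True
      define x where "x = r + s *\<^sub>R v"
      have x: "x \<in> D" using exit_in True unfolding x_def by auto
      have ab: "a0 \<le> \<alpha> x v" "\<alpha> x v \<le> a1" using alpha_bounds[OF x v] by auto
      have mb: "m0 \<le> m x v" "0 < m x v" "m x v \<le> Nmax" using m_bounds[OF x v] by auto
      have ap: "0 < \<alpha> x v" using ab a0_pos by simp
      have dd: "a0 * exp (- (a1 * T)) \<le> first_event_density \<alpha> r v s"
        using dens_bounds(3)[OF v _ _ r] True by auto
      have pf: "a0 / a1 \<le> \<sigma>f x v * m x v / \<alpha> x v"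
        using sfm_low[OF x v] ab ap a0_pos by (intro frac_le) auto
      have pm: "m0 / Nmax \<le> m x v / Nmax" using mb H4(1) by (intro divide_right_mono) auto
      have d0: "0 \<le> first_event_density \<alpha> r v s" using dens_bounds(1)[OF v] True by auto
      have pf0: "0 \<le> \<sigma>f x v * m x v / \<alpha> x v" using nonneg(1)[OF x v] mb ap by simp
      have dp0: "0 \<le> first_event_density \<alpha> r v s * (\<sigma>f x v * m x v / \<alpha> x v)" using d0 pf0 by (rule mult_nonneg_nonneg)
      have c0le: "c0 \<le> first_event_density \<alpha> r v s * (\<sigma>f x v * m x v / \<alpha> x v) * (m x v / Nmax)"
        unfolding c0_def using dd pf pm a0_pos a1_pos m0_pos H4(1) d0 pf0 dp0
        by (intro mult_mono) auto
      have e1: "ennreal c0 \<le> ennreal (first_event_density \<alpha> r v s) * ennreal (\<sigma>f x v * m x v / \<alpha> x v) * ennreal (m x v / Nmax)"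
      proof -
        have pm0: "0 \<le> m x v / Nmax" using mb H4(1) by simp
        have "ennreal (first_event_density \<alpha> r v s * (\<sigma>f x v * m x v / \<alpha> x v) * (m x v / Nmax))
            = ennreal (first_event_density \<alpha> r v s * (\<sigma>f x v * m x v / \<alpha> x v)) * ennreal (m x v / Nmax)"
          by (rule ennreal_mult[OF dp0 pm0])
        also have "ennreal (first_event_density \<alpha> r v s * (\<sigma>f x v * m x v / \<alpha> x v))
            = ennreal (first_event_density \<alpha> r v s) * ennreal (\<sigma>f x v * m x v / \<alpha> x v)"
          by (rule ennreal_mult[OF d0 pf0])
        finally show ?thesis using ennreal_leI[OF c0le] by simp
      qed
      have e2: "ennreal c2 * (\<integral>\<^sup>+ w. indicator V w * g x w \<partial>lborel)
          \<le> (\<integral>\<^sup>+ v'. indicator V v' * ennreal (\<pi>f x v v' / m x v) * g x v' \<partial>lborel)"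
      proof -
        have "ennreal c2 * (\<integral>\<^sup>+ w. indicator V w * g x w \<partial>lborel) \<le> (\<integral>\<^sup>+ w. ennreal c2 * (indicator V w * g x w) \<partial>lborel)"
          by (rule nn_integral_cmult_ge)
        also have "\<dots> \<le> (\<integral>\<^sup>+ v'. indicator V v' * ennreal (\<pi>f x v v' / m x v) * g x v' \<partial>lborel)"
        proof (rule nn_integral_mono)
          fix w
          show "ennreal c2 * (indicator V w * g x w) \<le> indicator V w * ennreal (\<pi>f x v w / m x v) * g x w"
          proof (cases "w \<in> V")
            case True
            have "c2 \<le> \<pi>f x v w / m x v" unfolding c2_def
              using pf_low[OF x v True] mb eps(1) C0 nonneg(2)[OF x v True] by (intro frac_le) auto
            then have "ennreal c2 \<le> ennreal (\<pi>f x v w / m x v)" by (rule ennreal_leI)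
            then show ?thesis using True by (simp add: mult_right_mono)
          qed simp
        qed
        finally show ?thesis .
      qed
      have "ennreal c0 * ennreal c2 * (\<integral>\<^sup>+ w. indicator V w * g x w \<partial>lborel)
         \<le> ennreal (first_event_density \<alpha> r v s) * ennreal (\<sigma>f x v * m x v / \<alpha> x v) * ennreal (m x v / Nmax) *
            (\<integral>\<^sup>+ v'. indicator V v' * ennreal (\<pi>f x v v' / m x v) * g x v' \<partial>lborel)"
        unfolding mult.assoc[of "ennreal c0"] by (rule mult_mono[OF e1 e2]) auto
      then show ?thesis using True unfolding x_def by simp
    qed simp
  qed
  finally show ?thesis .
qed

end

context nrw begin

definition "c4 = vmin^3 * (1/vmin - 1/vmax) / (2*R)^2"

lemma c4_nonneg: "0 \<le> c4" unfolding c4_def using vel by (simp add: frac_le)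

lemma Qf:
  assumes A: "A \<in> sets borel" "A \<subseteq> D \<times> V" and x: "x \<in> D"
  shows "ennreal (c0 * c2 * c4) * emeasure lborel A \<le> (\<integral>\<^sup>+ w. indicator V w * fiss (\<lambda>x w. indicator A (x, w)) x w \<partial>lborel)"
proof -
  have "ennreal (c0 * c2 * c4) * emeasure lborel A = ennreal c0 * ennreal c2 * (ennreal c4 * emeasure lborel A)"
    using c0_pos c2_pos c4_nonneg by (simp add: ennreal_mult mult.assoc)
  also have "\<dots> \<le> ennreal c0 * ennreal c2 * (\<integral>\<^sup>+ w. indicator V w * (\<integral>\<^sup>+ s. indicator {0..<\<kappa> x w} s *
      (\<integral>\<^sup>+ u. indicator V u * indicator A (x + s *\<^sub>R w, u) \<partial>lborel) \<partial>lborel) \<partial>lborel)"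
    using geo[OF D(1,2) R x vel A(1)] A(2) unfolding V_def c4_def by (intro mult_left_mono) auto
  also have "\<dots> \<le> (\<integral>\<^sup>+ w. ennreal c0 * ennreal c2 * (indicator V w * (\<integral>\<^sup>+ s. indicator {0..<\<kappa> x w} s *
      (\<integral>\<^sup>+ u. indicator V u * indicator A (x + s *\<^sub>R w, u) \<partial>lborel) \<partial>lborel)) \<partial>lborel)"
    by (rule nn_integral_cmult_ge)
  also have "\<dots> \<le> (\<integral>\<^sup>+ w. indicator V w * fiss (\<lambda>x w. indicator A (x, w)) x w \<partial>lborel)"
  proof (rule nn_integral_mono)
    fix w
    show "ennreal c0 * ennreal c2 * (indicator V w * (\<integral>\<^sup>+ s. indicator {0..<\<kappa> x w} s *
      (\<integral>\<^sup>+ u. indicator V u * indicator A (x + s *\<^sub>R w, u) \<partial>lborel) \<partial>lborel)) \<le> indicator V w * fiss (\<lambda>x w. indicator A (x, w)) x w"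
    proof (cases "w \<in> V")
      case True
      show ?thesis using N1[OF x True, of "\<lambda>x w. indicator A (x, w)"] True by simp
    qed simp
  qed
  finally show ?thesis .
qed

lemma final:
  assumes A: "A \<in> sets borel" "A \<subseteq> D \<times> V" and r: "r \<in> D" and v: "v \<in> V"
  shows "ennreal (c0 * c2 * (c0 * c2 * c4) / a1) * emeasure lborel A \<le> cond_prob D V \<sigma>s \<sigma>f \<pi>s \<pi>f Nmax 2 A r v"
proof -
  define gA where "gA = (\<lambda>(x::real^3) (w::real^3). indicator A (x, w) :: ennreal)"
  define g1 where "g1 = (\<lambda>(x::real^3) (w::real^3). 1 :: ennreal)"
  have k2: "killed_expect D V \<sigma>s \<sigma>f \<pi>s \<pi>f Nmax 2 g = kern (kern g)" for g
    unfolding killed_expect_def by (simp add: numeral_2_eq_2)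
  have kp: "0 < \<kappa> r v" by (rule kappa_pos[OF r v])
  define LB where "LB = ennreal c0 * ennreal c2 * (ennreal (c0 * c2 * c4) * emeasure lborel A * ennreal (\<kappa> r v))"
  have "LB \<le> ennreal c0 * ennreal c2 * (\<integral>\<^sup>+ s. indicator {0..<\<kappa> r v} s * (\<integral>\<^sup>+ w. indicator V w * fiss gA (r + s *\<^sub>R v) w \<partial>lborel) \<partial>lborel)"
    unfolding LB_def
  proof (rule mult_left_mono)
    have "ennreal (c0 * c2 * c4) * emeasure lborel A * ennreal (\<kappa> r v)
        = (\<integral>\<^sup>+ s. (ennreal (c0 * c2 * c4) * emeasure lborel A) * indicator {0..<\<kappa> r v} s \<partial>lborel)"
      using kp by (subst nn_integral_cmult_indicator) auto
    also have "\<dots> \<le> (\<integral>\<^sup>+ s. indicator {0..<\<kappa> r v} s * (\<integral>\<^sup>+ w. indicator V w * fiss gA (r + s *\<^sub>R v) w \<partial>lborel) \<partial>lborel)"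
    proof (rule nn_integral_mono)
      fix s
      show "ennreal (c0 * c2 * c4) * emeasure lborel A * indicator {0..<\<kappa> r v} s
        \<le> indicator {0..<\<kappa> r v} s * (\<integral>\<^sup>+ w. indicator V w * fiss gA (r + s *\<^sub>R v) w \<partial>lborel)"
      proof (cases "s \<in> {0..<\<kappa> r v}")
        case True
        then have x: "r + s *\<^sub>R v \<in> D" using exit_in by auto
        show ?thesis using Qf[OF A x] True unfolding gA_def by simp
      qed simp
    qed
    finally show "ennreal (c0 * c2 * c4) * emeasure lborel A * ennreal (\<kappa> r v)
      \<le> (\<integral>\<^sup>+ s. indicator {0..<\<kappa> r v} s * (\<integral>\<^sup>+ w. indicator V w * fiss gA (r + s *\<^sub>R v) w \<partial>lborel) \<partial>lborel)" .
  qed simp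
  also have "\<dots> \<le> fiss (fiss gA) r v" by (rule N1[OF r v])
  also have "\<dots> \<le> kern (fiss gA) r v" by (rule kern_ge)
  also have "\<dots> \<le> kern (kern gA) r v" by (rule kern_mono[OF kern_ge r v])
  finally have num: "LB \<le> killed_expect D V \<sigma>s \<sigma>f \<pi>s \<pi>f Nmax 2 gA r v" unfolding k2 .
  have k1: "kern g1 x w \<le> 1" if "x \<in> D" "w \<in> V" for x w
    using U3[of g1 w x] Dn_le1[of w x] that unfolding g1_def by simp
  have den: "killed_expect D V \<sigma>s \<sigma>f \<pi>s \<pi>f Nmax 2 g1 r v \<le> ennreal (a1 * \<kappa> r v)"
    unfolding k2 using U3[of "kern g1" v r, OF k1 v] Dn_le[OF r v] by simp
  have eqLB: "LB / ennreal (a1 * \<kappa> r v) = ennreal (c0 * c2 * (c0 * c2 * c4) / a1) * emeasure lborel A"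
  proof -
    have nn: "0 \<le> c0 * c2 * (c0 * c2 * c4) * \<kappa> r v" using c0_pos c2_pos c4_nonneg kp by simp
    have "LB = emeasure lborel A * ennreal (c0 * c2 * (c0 * c2 * c4) * \<kappa> r v)"
      unfolding LB_def using c0_pos c2_pos c4_nonneg kp
      by (simp add: ennreal_mult[symmetric] mult_ac)
    then have "LB / ennreal (a1 * \<kappa> r v) = emeasure lborel A * (ennreal (c0 * c2 * (c0 * c2 * c4) * \<kappa> r v) / ennreal (a1 * \<kappa> r v))"
      by (simp add: ennreal_times_divide)
    also have "ennreal (c0 * c2 * (c0 * c2 * c4) * \<kappa> r v) / ennreal (a1 * \<kappa> r v) = ennreal (c0 * c2 * (c0 * c2 * c4) / a1)"
      using nn a1_pos kp by (simp add: divide_ennreal)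
    finally show ?thesis by (simp add: mult.commute)
  qed
  have "ennreal (c0 * c2 * (c0 * c2 * c4) / a1) * emeasure lborel A = LB / ennreal (a1 * \<kappa> r v)"
    using eqLB by simp
  also have "\<dots> \<le> killed_expect D V \<sigma>s \<sigma>f \<pi>s \<pi>f Nmax 2 gA r v / ennreal (a1 * \<kappa> r v)"
    by (rule divide_right_mono_ennreal[OF num])
  also have "\<dots> \<le> killed_expect D V \<sigma>s \<sigma>f \<pi>s \<pi>f Nmax 2 gA r v / killed_expect D V \<sigma>s \<sigma>f \<pi>s \<pi>f Nmax 2 g1 r v"
    by (rule ennreal_divide_antimono[OF den])
  also have "\<dots> = cond_prob D V \<sigma>s \<sigma>f \<pi>s \<pi>f Nmax 2 A r v"
    unfolding cond_prob_def gA_def g1_def ..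
  finally show ?thesis .
qed

end

theorem mainTheorem6:
  fixes D :: "(real^3) set"
    and vmin vmax Nmax :: real
    and \<sigma>s \<sigma>f :: "real^3 \<Rightarrow> real^3 \<Rightarrow> real"
    and \<pi>s \<pi>f :: "real^3 \<Rightarrow> real^3 \<Rightarrow> real^3 \<Rightarrow> real"
  defines "V \<equiv> Vset vmin vmax"
  assumes dom: "smooth_domain D" "bounded D" "convex D"
    and bdry: "frontier D \<in> null_sets lborel"
    and vel: "0 < vmin" "vmin < vmax"
    and meas: "set_borel_measurable borel (D \<times> V) (\<lambda>(r, v). \<sigma>s r v)"
              "set_borel_measurable borel (D \<times> V) (\<lambda>(r, v). \<sigma>f r v)"
              "set_borel_measurable borel (D \<times> V \<times> V) (\<lambda>(r, v, v'). \<pi>s r v v')"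
              "set_borel_measurable borel (D \<times> V \<times> V) (\<lambda>(r, v, v'). \<pi>f r v v')"
    and nonneg: "\<And>r v. r \<in> D \<Longrightarrow> v \<in> V \<Longrightarrow> 0 \<le> \<sigma>s r v \<and> 0 \<le> \<sigma>f r v"
                "\<And>r v v'. r \<in> D \<Longrightarrow> v \<in> V \<Longrightarrow> v' \<in> V \<Longrightarrow> 0 \<le> \<pi>s r v v' \<and> 0 \<le> \<pi>f r v v'"
    and norm_s: "\<And>r v. r \<in> D \<Longrightarrow> v \<in> V \<Longrightarrow> (LINT v':V|lborel. \<pi>s r v v') = 1"
    and H1: "\<exists>C. \<forall>r\<in>D. \<forall>v\<in>V. \<forall>v'\<in>V.
               \<sigma>s r v \<le> C \<and> \<sigma>f r v \<le> C \<and> \<pi>s r v v' \<le> C \<and> \<pi>f r v v' \<le> C"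
    and H3: "\<exists>\<epsilon>>0. \<forall>r\<in>D. \<forall>v\<in>V. \<forall>v'\<in>V. \<epsilon> \<le> \<sigma>f r v * \<pi>f r v v'"
    and H4: "1 < Nmax" "\<And>r v. r \<in> D \<Longrightarrow> v \<in> V \<Longrightarrow> mean_offspring \<pi>f V r v \<le> Nmax"
  shows "\<exists>n0::nat. 1 \<le> n0 \<and> (\<exists>c1::real. 0 < c1 \<and>
           (\<forall>r\<in>D. \<forall>v\<in>V. \<forall>A \<in> sets borel. A \<subseteq> D \<times> V \<longrightarrow>
              ennreal c1 * emeasure (uniform_measure lborel (D \<times> V)) A
                \<le> cond_prob D V \<sigma>s \<sigma>f \<pi>s \<pi>f Nmax n0 A r v))"
proof -
  obtain C where C: "\<forall>r\<in>D. \<forall>v\<in>V. \<forall>v'\<in>V.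
               \<sigma>s r v \<le> C \<and> \<sigma>f r v \<le> C \<and> \<pi>s r v v' \<le> C \<and> \<pi>f r v v' \<le> C" using H1 by blast
  obtain \<epsilon> where eps: "0 < \<epsilon>" "\<forall>r\<in>D. \<forall>v\<in>V. \<forall>v'\<in>V. \<epsilon> \<le> \<sigma>f r v * \<pi>f r v v'" using H3 by blast
  obtain B where B: "\<forall>y\<in>D. norm y \<le> B" using dom(2) unfolding bounded_iff by blast
  define Rr where "Rr = max B 1"
  have Rr: "\<And>y. y \<in> D \<Longrightarrow> norm y \<le> Rr" using B unfolding Rr_def by force
  have Rr0: "0 < Rr" unfolding Rr_def by simp
  have Dprops: "open D" "D \<noteq> {}" using dom(1) unfolding smooth_domain_def by auto
  interpret nrw D V vmin vmax Nmax C \<epsilon> Rr \<sigma>s \<sigma>f \<pi>s \<pi>f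
  proof
    show "V = Vset vmin vmax" unfolding V_def ..
  qed (use Dprops dom(3) Rr vel meas nonneg norm_s C eps H4 in auto)
  have DVs: "D \<times> V \<in> sets lborel"
  proof -
    have "D \<times> V \<in> sets (lborel \<Otimes>\<^sub>M lborel)" using Dprops(1) by (intro pair_measureI) auto
    then show ?thesis unfolding lborel_prod .
  qed
  have DVe: "emeasure lborel (D \<times> V) = emeasure lborel D * emeasure lborel V"
  proof -
    have "emeasure (lborel \<Otimes>\<^sub>M lborel) (D \<times> V) = emeasure lborel D * emeasure lborel V"
      using Dprops(1) by (intro lborel.emeasure_pair_measure_Times) auto
    then show ?thesis unfolding lborel_prod .
  qed
  have Dpos: "0 < emeasure lborel D"
  proof -
    obtain x where x: "x \<in> D" using Dprops(2) by auto
    obtain e where e: "0 < e" "ball x e \<subseteq> D" using Dprops(1) x by (meson open_contains_ball)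
    have "0 < measure lborel (ball x e)" using e content_ball_pos by blast
    moreover have "emeasure lborel (ball x e) \<noteq> \<infinity>" using emeasure_lborel_ball_finite[of x e] by simp
    ultimately have "0 < emeasure lborel (ball x e)" by (simp add: emeasure_eq_ennreal_measure)
    also have "\<dots> \<le> emeasure lborel D" using e Dprops(1) by (intro emeasure_mono) auto
    finally show ?thesis .
  qed
  have Dfin: "emeasure lborel D < \<infinity>" using emeasure_bounded_finite[OF dom(2)] by simp
  have Vpos: "0 < emeasure lborel V" using V_pos V_fin by (simp add: emeasure_eq_ennreal_measure)
  define L where "L = measure lborel (D \<times> V)"
  have DVL: "emeasure lborel (D \<times> V) = ennreal L" and L0: "0 < L"
  proof -
    have fin: "emeasure lborel (D \<times> V) < \<infinity>" unfolding DVe using Dfin V_fin by (simp add: ennreal_mult_less_top)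
    then show "emeasure lborel (D \<times> V) = ennreal L" unfolding L_def by (simp add: emeasure_eq_ennreal_measure)
    have "0 < emeasure lborel (D \<times> V)" unfolding DVe using Dpos Vpos by (simp add: ennreal_zero_less_mult_iff)
    then show "0 < L" using fin unfolding L_def by (simp add: measure_def enn2real_positive_iff less_top)
  qed
  define K where "K = c0 * c2 * (c0 * c2 * c4) / a1"
  have c4p: "0 < c4" unfolding c4_def using vel Rr0 by (simp add: frac_less2)
  have K0: "0 < K" unfolding K_def using c0_pos c2_pos c4p a1_pos by simp
  show ?thesis
  proof (intro exI conjI ballI allI impI)
    show "1 \<le> (2::nat)" by simp
    show "0 < K * L" using K0 L0 by simp
    fix r v A assume r: "r \<in> D" and v: "v \<in> V" and A: "A \<in> sets borel" and AD: "A \<subseteq> D \<times> V"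
    have "emeasure (uniform_measure lborel (D \<times> V)) A = emeasure lborel A / ennreal L"
      using DVs A AD DVL by (subst emeasure_uniform_measure) (auto simp: Int_absorb1)
    then have "ennreal (K * L) * emeasure (uniform_measure lborel (D \<times> V)) A = (ennreal K * emeasure lborel A) * ennreal L / ennreal L"
      using K0 L0 by (simp add: ennreal_mult ennreal_times_divide mult_ac)
    also have "\<dots> = ennreal K * emeasure lborel A"
      using L0 by (intro ennreal_mult_divide_eq) auto
    also have "\<dots> \<le> cond_prob D V \<sigma>s \<sigma>f \<pi>s \<pi>f Nmax 2 A r v"
      unfolding K_def by (rule final[OF A AD r v])
    finally show "ennreal (K * L) * emeasure (uniform_measure lborel (D \<times> V)) A \<le> cond_prob D V \<sigma>s \<sigma>f \<pi>s \<pi>f Nmax 2 A r v" .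
  qed
qed


end
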